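(* The shuffle algebra $\mathbf{PQSym}=\bigoplus_{n\ge1}K[PF_n]$ with operations $f\bullet_\gamma g=(f\times g)\cdot\gamma$, equipped with the coproduct $\Delta(f)=\sum_{r=1}^{n-1}\mathrm{Park}(f(1),\dots,f(r))\otimes\mathrm{Park}(f(r+1),\dots,f(n))$ for $f\in PF_n$, is a shuffle bialgebra.
   Context: Permutations $\sigma\in S_n$ are written as words $(\sigma(1),\dots,\sigma(n))$; $1_n$ is the identity, and $\sigma\cdot\tau$ denotes composition, $(\sigma\cdot\tau)(i)=\sigma(\tau(i))$. For $\sigma\in S_n$, $\tau\in S_m$, $\sigma\times\tau\in S_{n+m}$ is $(\sigma(1),\dots,\sigma(n),\tau(1)+n,\dots,\tau(m)+n)$. For nonnegative integers $n_1,\dots,n_r$ with sum $n$, $Sh(n_1,\dots,n_r)$ is the set of $\sigma\in S_n$ such that $\sigma^{-1}(n_1+\dots+n_{k-1}+1)<\dots<\sigma^{-1}(n_1+\dots+n_k)$ for every $k$. For $n,m\ge0$, $\epsilon_{n,m}=(n+1,\dots,n+m,1,\dots,n)\in Sh(n,m)$. A parking function of size $n$ is a map $f:\{1,\dots,n\}\to\{1,\dots,n\}$ (written $(f(1),\dots,f(n))$) whose nondecreasing rearrangement $f^\uparrow$ satisfies $f^\uparrow(i)\le i$ for all $i$; $PF_n$ is the set of them, of degree $n$. For $f\in PF_n$, $g\in PF_m$: $f\times g=(f(1),\dots,f(n),g(1)+n,\dots,g(m)+n)$, and $(h\cdot\gamma)(i)=h(\gamma(i))$. For a nondecreasing map $h:\{1,\dots,k\}\to\mathbb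 Z_{>0}$, $\mathrm{Park}(h)(1)=1$ and $\mathrm{Park}(h)(j)=\min\{\mathrm{Park}(h)(j-1)+h(j)-h(j-1),\,j\}$ for $j>1$. For an arbitrary map $h:\{1,\dots,k\}\to\mathbb Z_{>0}$, write $h=h^\uparrow\cdot\sigma$ with $h^\uparrow$ nondecreasing and $\sigma\in S_k$, and set $\mathrm{Park}(h)=\mathrm{Park}(h^\uparrow)\cdot\sigma$ (independent of the choice of $\sigma$). A shuffle algebra is a graded vector space $A=\bigoplus_{n\ge0}A_n$ over a field $K$ with linear maps $\bullet_\gamma:A_n\otimes A_m\to A_{n+m}$ for all $n,m\ge0$ and $\gamma\in Sh(n,m)$, such that for $x\in A_n$, $y\in A_m$, $z\in A_r$ one has $x\bullet_\gamma(y\bullet_\delta z)=(x\bullet_\sigma y)\bullet_\lambda z$ whenever $\gamma\in Sh(n,m+r)$, $\delta\in Sh(m,r)$, $\sigma\in Sh(n,m)$, $\lambda\in Sh(n+m,r)$ satisfy $(1_n\times\delta)\cdot\gamma=(\sigma\times1_r)\cdot\lambda$. Decomposition of shuffles: for $\gamma\in Sh(n,m)$ and $0\le r\le n+m$, put $n_1=|\gamma^{-1}(\{1,\dots,n\})\cap\{1,\dots,r\}|$ and $m_1=r-n_1$; there are unique $\gamma^r_{(1)}\in Sh(n_1,m_1)$ and $\gamma^{n+m-r}_{(2)}\in Sh(n-n_1,m-m_1)$ with $\gamma=(1_{n_1}\times\epsilon_{n-n_1,m_1}\times1_{m-m_1})\cdot(\gamma^r_{(1)}\times\gamma^{n+m-r}_{(2)})$.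 A shuffle bialgebra is a shuffle algebra $A$ with $A_0=0$ together with a coassociative coproduct $\Delta:A\to A\otimes A$ with $\Delta(A_n)\subseteq\bigoplus_{i=1}^{n-1}A_i\otimes A_{n-i}$, such that for $x\in A_n$, $y\in A_m$, $\gamma\in Sh(n,m)$: $\Delta(x\bullet_\gamma y)=\sum_{r=1}^{n+m-1}\sum(x_{(1)}\bullet_{\gamma^r_{(1)}}y_{(1)})\otimes(x_{(2)}\bullet_{\gamma^{n+m-r}_{(2)}}y_{(2)})$, where, with $\Delta_+(z)=z\otimes1+1\otimes z+\Delta(z)$ on $K1\oplus A$ ($1$ of degree $0$), the inner sum is over the homogeneous components $x_{(1)}\otimes x_{(2)}$ of $\Delta_+(x)$ with $|x_{(1)}|=n_1$ and $y_{(1)}\otimes y_{(2)}$ of $\Delta_+(y)$ with $|y_{(1)}|=m_1$, using the conventions $1\bullet_\tau z=z\bullet_\tau1=z$. *)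

theory Defs
  imports Main
begin

text \<open>A permutation of S_n is the word (sigma(1),...,sigma(n)), stored as a list
  (list index i-1 holds sigma(i)).\<close>

definition is_perm :: "nat \<Rightarrow> nat list \<Rightarrow> bool" where
  "is_perm n \<sigma> \<longleftrightarrow> distinct \<sigma> \<and> set \<sigma> = {1..n}"

definition idp :: "nat \<Rightarrow> nat list" where
  "idp n = [1..<n+1]"

text \<open>(h . gamma)(i) = h(gamma(i)); used both for composition of permutations
  and for composing maps (parking functions) with permutations.\<close>
definition comp_w :: "nat list \<Rightarrow> nat list \<Rightarrow> nat list" where
  "comp_w h \<gamma> = map (\<lambda>i. h ! (i - 1)) \<gamma>"

definition times_w :: "nat list \<Rightarrow> nat list \<Rightarrow> nat list" where
  "times_w \<sigma> \<tau> = \<sigma> @ map (\<lambda>i. i + length \<sigma>) \<tau>"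

text \<open>Sh(n,m): sigma^{-1} is increasing on {1..n} and on {n+1..n+m}, i.e.
  two values from the same block appear in the word in increasing order.\<close>
definition Sh :: "nat \<Rightarrow> nat \<Rightarrow> nat list set" where
  "Sh n m = {\<sigma>. is_perm (n + m) \<sigma> \<and>
     (\<forall>p q. p < q \<and> q < length \<sigma> \<and> ((\<sigma> ! p \<le> n) \<longleftrightarrow> (\<sigma> ! q \<le> n))
              \<longrightarrow> \<sigma> ! p < \<sigma> ! q)}"

definition eps :: "nat \<Rightarrow> nat \<Rightarrow> nat list" where
  "eps n m = [n+1..<n+m+1] @ [1..<n+1]"

definition is_pf :: "nat \<Rightarrow> nat list \<Rightarrow> bool" where
  "is_pf n f \<longleftrightarrow> length f = n \<and> (\<forall>i<n. 1 \<le> f ! i \<and> f ! i \<le> n)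
      \<and> (\<forall>i<n. sort f ! i \<le> i + 1)"

text \<open>Park of a nondecreasing list, 0-indexed: pk h j is Park(h)(j+1).\<close>
fun pk :: "nat list \<Rightarrow> nat \<Rightarrow> nat" where
  "pk h 0 = 1"
| "pk h (Suc j) = min (pk h j + (h ! Suc j - h ! j)) (j + 2)"

definition park_up :: "nat list \<Rightarrow> nat list" where
  "park_up h = map (pk h) [0..<length h]"

definition park :: "nat list \<Rightarrow> nat list" where
  "park h = comp_w (park_up (sort h))
     (SOME \<sigma>. is_perm (length h) \<sigma> \<and> h = comp_w (sort h) \<sigma>)"

definition supp :: "('b \<Rightarrow> 'k::zero) \<Rightarrow> 'b set" where
  "supp x = {b. x b \<noteq> 0}"

text \<open>The vector space with basis B: finitely supported functions B -> K.\<close>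
definition fvec :: "'b set \<Rightarrow> ('b \<Rightarrow> 'k::zero) set" where
  "fvec B = {x. finite (supp x) \<and> supp x \<subseteq> B}"

definition hom :: "'b set \<Rightarrow> ('b \<Rightarrow> nat) \<Rightarrow> nat \<Rightarrow> ('b \<Rightarrow> 'k::zero) set" where
  "hom B deg n = {x \<in> fvec B. \<forall>b \<in> supp x. deg b = n}"

definition bvec :: "'b \<Rightarrow> 'b \<Rightarrow> 'k::{zero,one}" where
  "bvec b = (\<lambda>c. if c = b then 1 else 0)"

definition tens :: "('b \<Rightarrow> 'k::times) \<Rightarrow> ('c \<Rightarrow> 'k) \<Rightarrow> ('b \<times> 'c \<Rightarrow> 'k)" where
  "tens u v = (\<lambda>(p, q). u p * v q)"

text \<open>Linear extensions of F tensor id and id tensor F, applied to a tensor t.\<close>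
definition lmap :: "(('b \<Rightarrow> 'k::comm_ring_1) \<Rightarrow> ('b \<times> 'b \<Rightarrow> 'k)) \<Rightarrow> ('b \<times> 'b \<Rightarrow> 'k)
                    \<Rightarrow> ('b \<times> 'b \<times> 'b \<Rightarrow> 'k)" where
  "lmap F t = (\<lambda>(a, b, c). \<Sum>(p, q)\<in>supp t. t (p, q) * F (bvec p) (a, b) * bvec q c)"

definition rmap :: "(('b \<Rightarrow> 'k::comm_ring_1) \<Rightarrow> ('b \<times> 'b \<Rightarrow> 'k)) \<Rightarrow> ('b \<times> 'b \<Rightarrow> 'k)
                    \<Rightarrow> ('b \<times> 'b \<times> 'b \<Rightarrow> 'k)" where
  "rmap F t = (\<lambda>(a, b, c). \<Sum>(p, q)\<in>supp t. t (p, q) * bvec p a * F (bvec q) (b, c))"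

definition shuffle_algebra ::
  "'b set \<Rightarrow> ('b \<Rightarrow> nat) \<Rightarrow> (nat list \<Rightarrow> ('b \<Rightarrow> 'k::field) \<Rightarrow> ('b \<Rightarrow> 'k) \<Rightarrow> ('b \<Rightarrow> 'k)) \<Rightarrow> bool"
  where
  "shuffle_algebra B deg mu \<longleftrightarrow>
    (\<forall>n m \<gamma>. \<gamma> \<in> Sh n m \<longrightarrow>
       (\<forall>x\<in>hom B deg n. \<forall>y\<in>hom B deg m. mu \<gamma> x y \<in> hom B deg (n + m)) \<and>
       (\<forall>x\<in>hom B deg n. \<forall>x'\<in>hom B deg n. \<forall>y\<in>hom B deg m. \<forall>a.
          mu \<gamma> (\<lambda>b. a * x b + x' b) y = (\<lambda>b. a * mu \<gamma> x y b + mu \<gamma> x' y b)) \<and>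
       (\<forall>x\<in>hom B deg n. \<forall>y\<in>hom B deg m. \<forall>y'\<in>hom B deg m. \<forall>a.
          mu \<gamma> x (\<lambda>b. a * y b + y' b) = (\<lambda>b. a * mu \<gamma> x y b + mu \<gamma> x y' b))) \<and>
    (\<forall>n m r x y z \<gamma> \<delta> \<sigma> lam.
       x \<in> hom B deg n \<and> y \<in> hom B deg m \<and> z \<in> hom B deg r \<and>
       \<gamma> \<in> Sh n (m + r) \<and> \<delta> \<in> Sh m r \<and> \<sigma> \<in> Sh n m \<and> lam \<in> Sh (n + m) r \<and>
       comp_w (times_w (idp n) \<delta>) \<gamma> = comp_w (times_w \<sigma> (idp r)) lam
       \<longrightarrow> mu \<gamma> x (mu \<delta> y z) = mu lam (mu \<sigma> x y) z)"

definition sh_n1 :: "nat list \<Rightarrow> nat \<Rightarrow> nat \<Rightarrow> nat" where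
  "sh_n1 \<gamma> n r = length (filter (\<lambda>v. v \<le> n) (take r \<gamma>))"

definition sh_decomp :: "nat list \<Rightarrow> nat \<Rightarrow> nat \<Rightarrow> nat \<Rightarrow> nat list \<times> nat list" where
  "sh_decomp \<gamma> n m r =
    (let n1 = sh_n1 \<gamma> n r; m1 = r - n1 in
     THE (g1, g2). g1 \<in> Sh n1 m1 \<and> g2 \<in> Sh (n - n1) (m - m1) \<and>
       \<gamma> = comp_w (times_w (times_w (idp n1) (eps (n - n1) m1)) (idp (m - m1))) (times_w g1 g2))"

text \<open>K1 + A has basis 'b option, None standing for the unit 1 (degree 0).\<close>
fun odeg :: "('b \<Rightarrow> nat) \<Rightarrow> 'b option \<Rightarrow> nat" where
  "odeg deg None = 0"
| "odeg deg (Some b) = deg b"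

definition dplus :: "(('b \<Rightarrow> 'k::field) \<Rightarrow> ('b \<times> 'b \<Rightarrow> 'k)) \<Rightarrow> ('b \<Rightarrow> 'k)
                     \<Rightarrow> ('b option \<times> 'b option \<Rightarrow> 'k)" where
  "dplus cop x = (\<lambda>(u, v). case (u, v) of
       (Some a, None) \<Rightarrow> x a
     | (None, Some a) \<Rightarrow> x a
     | (Some a, Some b) \<Rightarrow> cop x (a, b)
     | (None, None) \<Rightarrow> 0)"

text \<open>Product of two basis elements of K1 + A, with 1 . z = z . 1 = z.
  (The case 1 . 1 never occurs in the compatibility formula below.)\<close>
fun oprod :: "(nat list \<Rightarrow> ('b \<Rightarrow> 'k::field) \<Rightarrow> ('b \<Rightarrow> 'k) \<Rightarrow> ('b \<Rightarrow> 'k))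
              \<Rightarrow> nat list \<Rightarrow> 'b option \<Rightarrow> 'b option \<Rightarrow> ('b \<Rightarrow> 'k)" where
  "oprod mu \<tau> None (Some b) = bvec b"
| "oprod mu \<tau> (Some a) None = bvec a"
| "oprod mu \<tau> (Some a) (Some b) = mu \<tau> (bvec a) (bvec b)"
| "oprod mu \<tau> None None = (\<lambda>_. 0)"

definition shuffle_bialgebra ::
  "'b set \<Rightarrow> ('b \<Rightarrow> nat) \<Rightarrow> (nat list \<Rightarrow> ('b \<Rightarrow> 'k::field) \<Rightarrow> ('b \<Rightarrow> 'k) \<Rightarrow> ('b \<Rightarrow> 'k))
     \<Rightarrow> (('b \<Rightarrow> 'k) \<Rightarrow> ('b \<times> 'b \<Rightarrow> 'k)) \<Rightarrow> bool"
  where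
  "shuffle_bialgebra B deg mu cop \<longleftrightarrow>
    shuffle_algebra B deg mu \<and>
    hom B deg 0 = {(\<lambda>_. 0) :: 'b \<Rightarrow> 'k} \<and>
    \<comment> \<open>Delta is linear\<close>
    (\<forall>x\<in>fvec B. \<forall>x'\<in>fvec B. \<forall>a.
       cop (\<lambda>b. a * x b + x' b) = (\<lambda>t. a * cop x t + cop x' t)) \<and>
    \<comment> \<open>Delta(A_n) is contained in the sum over 1 <= i <= n-1 of A_i tensor A_(n-i)\<close>
    (\<forall>n. \<forall>x\<in>hom B deg n. cop x \<in> fvec (B \<times> B) \<and>
       (\<forall>(p, q)\<in>supp (cop x). 1 \<le> deg p \<and> deg p \<le> n - 1 \<and> deg q = n - deg p)) \<and>
    \<comment> \<open>coassociativity\<close>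
    (\<forall>x\<in>fvec B. lmap cop (cop x) = rmap cop (cop x)) \<and>
    \<comment> \<open>compatibility\<close>
    (\<forall>n m \<gamma> x y. x \<in> hom B deg n \<and> y \<in> hom B deg m \<and> \<gamma> \<in> Sh n m \<longrightarrow>
       cop (mu \<gamma> x y) =
       (\<lambda>t. \<Sum>r\<in>{1..n+m-1}.
          let n1 = sh_n1 \<gamma> n r; m1 = r - n1; g = sh_decomp \<gamma> n m r in
          \<Sum>(a1, a2)\<in>supp (dplus cop x). \<Sum>(b1, b2)\<in>supp (dplus cop y).
            if odeg deg a1 = n1 \<and> odeg deg b1 = m1
            then dplus cop x (a1, a2) * dplus cop y (b1, b2) *
                 tens (oprod mu (fst g) a1 b1) (oprod mu (snd g) a2 b2) t
            else 0))"

definition PF_basis :: "nat list set" where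
  "PF_basis = {f. \<exists>n\<ge>1. is_pf n f}"

definition pq_prod :: "nat list \<Rightarrow> (nat list \<Rightarrow> 'k::field) \<Rightarrow> (nat list \<Rightarrow> 'k) \<Rightarrow> (nat list \<Rightarrow> 'k)" where
  "pq_prod \<gamma> x y = (\<lambda>h. \<Sum>f\<in>supp x. \<Sum>g\<in>supp y.
      x f * y g * bvec (comp_w (times_w f g) \<gamma>) h)"

definition pq_cop :: "(nat list \<Rightarrow> 'k::field) \<Rightarrow> (nat list \<times> nat list \<Rightarrow> 'k)" where
  "pq_cop x = (\<lambda>t. \<Sum>f\<in>supp x. \<Sum>r\<in>{1..<length f}.
      x f * tens (bvec (park (take r f))) (bvec (park (drop r f))) t)"

end

theory Submission
  imports Defs "HOL-Combinatorics.Permutations"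
begin

definition cnt :: "nat list \<Rightarrow> nat \<Rightarrow> nat" where
  "cnt h u = length (filter (\<lambda>x. x < u) h)"

fun pv :: "nat list \<Rightarrow> nat \<Rightarrow> nat" where
  "pv h 0 = 1"
| "pv h (Suc v) = min (pv h v + 1) (cnt h (Suc v) + 1)"

lemma cnt_mset: "mset h = mset h' \<Longrightarrow> cnt h = cnt h'"
  unfolding cnt_def by (metis mset_filter size_mset)

lemma pv_cong: "(\<forall>u\<le>v. cnt h u = cnt h' u) \<Longrightarrow> pv h v = pv h' v"
  by (induction v) auto

lemma pv_mset: "mset h = mset h' \<Longrightarrow> pv h = pv h'"
  using cnt_mset pv_cong by (metis ext)

lemma cnt_0[simp]: "cnt h 0 = 0"
  by (simp add: cnt_def)

lemma pv_le_cnt: "pv h v \<le> cnt h v + 1"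
  by (cases v) auto

lemma pv_ge1: "1 \<le> pv h v"
  by (induction v) auto

lemma cnt_mono: "u \<le> u' \<Longrightarrow> cnt h u \<le> cnt h u'"
  unfolding cnt_def by (induction h) auto

lemma cnt_le_length: "cnt h u \<le> length h"
  unfolding cnt_def by simp

lemma pv_Suc_ge: "pv h v \<le> pv h (Suc v)"
  using pv_le_cnt[of h v] cnt_mono[of v "Suc v" h] by auto

lemma pv_Suc_le: "pv h (Suc v) \<le> pv h v + 1"
  by simp

lemma pv_mono: "v \<le> v' \<Longrightarrow> pv h v \<le> pv h v'"
proof (induction v')
  case (Suc v')
  then show ?case using pv_Suc_ge[of h v'] by (cases "v = Suc v'") auto
qed simp

lemma pv_lip: "v \<le> v' \<Longrightarrow> pv h v' \<le> pv h v + (v' - v)"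
proof (induction v')
  case 0 then show ?case by simp
next
  case (Suc v')
  show ?case
  proof (cases "v = Suc v'")
    case False
    then have "v \<le> v'" using Suc by simp
    then show ?thesis using Suc pv_Suc_le[of h v'] by simp
  qed simp
qed

lemma sorted_cnt: "sorted s \<Longrightarrow> i < length s \<Longrightarrow> (s ! i < u \<longleftrightarrow> i < cnt s u)"
proof (induction s arbitrary: i)
  case Nil then show ?case by simp
next
  case (Cons x s)
  show ?case
  proof (cases "x < u")
    case True
    then show ?thesis using Cons by (cases i) (auto simp: cnt_def)
  next
    case False
    then have "filter (\<lambda>y. y < u) s = []" using Cons.prems(1)
      by (auto simp: filter_empty_conv)
    moreover have "\<not> (x # s) ! i < u" using False Cons.prems
      by (cases i) (auto, meson leD le_less_trans nth_mem)
    ultimately show ?thesis using False by (simp add: cnt_def)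
  qed
qed

lemma pv_stretch:
  assumes "\<forall>u. a < u \<and> u \<le> a + t \<longrightarrow> cnt h u = c" "0 < t"
  shows "pv h (a + t) = min (pv h a + t) (c + 1)"
  using assms
proof (induction t)
  case 0 then show ?case by simp
next
  case (Suc t)
  show ?case
  proof (cases "t = 0")
    case True
    then show ?thesis using Suc.prems by simp
  next
    case False
    then have "pv h (a + t) = min (pv h a + t) (c + 1)" using Suc by auto
    moreover have "cnt h (Suc (a + t)) = c" using Suc.prems by auto
    ultimately show ?thesis by simp
  qed
qed

lemma pk_le: "pk s k \<le> k + 1"
  by (cases k) auto

lemma pv_below_min:
  assumes "\<forall>x\<in>set h. v \<le> x"
  shows "pv h v = 1"
  using assms
proof (induction v)
  case 0 then show ?case by simp
next
  case (Suc v)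
  have "cnt h (Suc v) = 0" using Suc.prems by (auto simp: cnt_def filter_empty_conv)
  then show ?case by simp
qed

lemma pk_pv: "sorted s \<Longrightarrow> k < length s \<Longrightarrow> pk s k = pv s (s ! k)"
proof (induction k)
  case 0
  have "\<forall>x\<in>set s. s ! 0 \<le> x" using 0
    by (metis in_set_conv_nth le0 sorted_iff_nth_mono)
  then show ?case using pv_below_min by simp
next
  case (Suc k)
  let ?a = "s ! k" and ?b = "s ! Suc k"
  have ab: "?a \<le> ?b" using Suc.prems by (simp add: sorted_iff_nth_mono)
  have IH: "pk s k = pv s ?a" using Suc by simp
  show ?case
  proof (cases "?a = ?b")
    case True
    then show ?thesis using IH pk_le[of s k] by simp
  next
    case False
    have c: "\<forall>u. ?a < u \<and> u \<le> ?a + (?b - ?a) \<longrightarrow> cnt s u = Suc k"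
    proof (intro allI impI)
      fix u assume u: "?a < u \<and> u \<le> ?a + (?b - ?a)"
      have "k < cnt s u" using sorted_cnt[of s k u] u Suc.prems by simp
      moreover have "\<not> Suc k < cnt s u" using sorted_cnt[of s "Suc k" u] u Suc.prems ab by simp
      ultimately show "cnt s u = Suc k" by simp
    qed
    have "pv s (?a + (?b - ?a)) = min (pv s ?a + (?b - ?a)) (Suc k + 1)"
      using pv_stretch[OF c] False ab by simp
    then show ?thesis using IH ab by simp
  qed
qed

lemma park_up_nth: "i < length h \<Longrightarrow> park_up h ! i = pk h i"
  by (simp add: park_up_def)

lemma comp_w_nth: "i < length \<gamma> \<Longrightarrow> comp_w h \<gamma> ! i = h ! (\<gamma> ! i - 1)"
  by (simp add: comp_w_def)

lemma length_comp_w[simp]: "length (comp_w h \<gamma>) = length \<gamma>"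
  by (simp add: comp_w_def)

lemma is_perm_nth: "is_perm n \<sigma> \<Longrightarrow> i < length \<sigma> \<Longrightarrow> 1 \<le> \<sigma> ! i \<and> \<sigma> ! i \<le> n"
  unfolding is_perm_def using nth_mem by fastforce

lemma is_perm_length: "is_perm n \<sigma> \<Longrightarrow> length \<sigma> = n"
  unfolding is_perm_def by (metis card_atLeastAtMost diff_Suc_1 distinct_card)

lemma park_exists: "\<exists>\<sigma>. is_perm (length h) \<sigma> \<and> h = comp_w (sort h) \<sigma>"
proof -
  obtain p where p: "p permutes {..<length (sort h)}" "permute_list p (sort h) = h"
    using mset_eq_permutation[of h "sort h"] by auto
  define \<sigma> where "\<sigma> = map (\<lambda>i. p i + 1) [0..<length h]"
  have inj: "inj_on p {..<length h}" using p(1) permutes_inj_on by force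
  have img: "p ` {..<length h} = {..<length h}" using p(1) permutes_image by force
  have "distinct \<sigma>" unfolding \<sigma>_def distinct_map
    using inj by (auto simp: inj_on_def atLeast0LessThan)
  moreover have "set \<sigma> = {1..length h}"
  proof -
    have "set \<sigma> = (\<lambda>i. i + 1) ` (p ` {..<length h})"
      unfolding \<sigma>_def by (auto simp: atLeast0LessThan image_image)
    also have "\<dots> = {1..length h}" using img
      by (auto simp: image_iff) (metis Suc_pred le_simps(3) lessThan_iff)
    finally show ?thesis .
  qed
  moreover have "h = comp_w (sort h) \<sigma>"
    using p(2) unfolding \<sigma>_def comp_w_def permute_list_def by (simp add: comp_def)
  ultimately show ?thesis unfolding is_perm_def by blast
qed

lemma park_eq: "park h = map (pv h) h"
proof -
  define \<sigma> where "\<sigma> = (SOME \<sigma>. is_perm (length h) \<sigma> \<and> h = comp_w (sort h) \<sigma>)"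
  have s: "is_perm (length h) \<sigma> \<and> h = comp_w (sort h) \<sigma>"
    unfolding \<sigma>_def using park_exists by (rule someI_ex)
  have len: "length \<sigma> = length h" using s is_perm_length by blast
  have pvs: "pv (sort h) = pv h" by (rule pv_mset) simp
  show ?thesis
  proof (rule nth_equalityI)
    show "length (park h) = length (map (pv h) h)"
      by (simp add: park_def len \<sigma>_def[symmetric])
  next
    fix i assume "i < length (park h)"
    then have i: "i < length h" by (simp add: park_def len \<sigma>_def[symmetric])
    have r: "1 \<le> \<sigma> ! i \<and> \<sigma> ! i \<le> length h" using is_perm_nth s i len by metis
    have hi: "h ! i = sort h ! (\<sigma> ! i - 1)"
      using s i len comp_w_nth by metis
    have "park h ! i = park_up (sort h) ! (\<sigma> ! i - 1)"
      unfolding park_def \<sigma>_def[symmetric] using comp_w_nth i len by metis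
    also have "\<dots> = pk (sort h) (\<sigma> ! i - 1)" using r by (intro park_up_nth) auto
    also have "\<dots> = pv (sort h) (sort h ! (\<sigma> ! i - 1))" using r by (intro pk_pv) auto
    also have "\<dots> = pv h (h ! i)" using hi pvs by simp
    finally show "park h ! i = map (pv h) h ! i" using i by simp
  qed
qed


abbreviation lf :: "('a \<Rightarrow> bool) \<Rightarrow> 'a list \<Rightarrow> nat" where
  "lf P xs \<equiv> length (filter P xs)"

lemma lf_mono: "(\<forall>x\<in>set xs. P x \<longrightarrow> Q x) \<Longrightarrow> lf P xs \<le> lf Q xs"
  by (induction xs) auto

lemma lf_split: "lf P xs = lf (\<lambda>x. P x \<and> Q x) xs + lf (\<lambda>x. P x \<and> \<not> Q x) xs"
  by (induction xs) auto

lemma lf_sub: "mset g \<subseteq># mset h \<Longrightarrow> lf P g \<le> lf P h"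
  by (metis mset_filter multiset_filter_mono size_mset size_mset_mono)

lemma lf_cong: "(\<forall>x\<in>set xs. P x = Q x) \<Longrightarrow> lf P xs = lf Q xs"
  by (metis filter_cong)

definition pfc :: "nat \<Rightarrow> nat list \<Rightarrow> bool" where
  "pfc n f \<longleftrightarrow> length f = n \<and> (\<forall>x\<in>set f. 1 \<le> x \<and> x \<le> n) \<and> (\<forall>k\<le>n. k \<le> cnt f (Suc k))"

lemma is_pf_pfc: "is_pf n f \<longleftrightarrow> pfc n f"
proof -
  have A: "length f = n \<Longrightarrow> (\<forall>i<n. 1 \<le> f ! i \<and> f ! i \<le> n) \<longleftrightarrow> (\<forall>x\<in>set f. 1 \<le> x \<and> x \<le> n)"
    by (metis in_set_conv_nth)
  have B: "length f = n \<Longrightarrow> (\<forall>i<n. sort f ! i \<le> i + 1) \<longleftrightarrow> (\<forall>k\<le>n. k \<le> cnt f (Suc k))"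
  proof -
    assume l: "length f = n"
    have c: "cnt (sort f) = cnt f" by (rule cnt_mset) simp
    have "(\<forall>i<n. sort f ! i \<le> i + 1) \<longleftrightarrow> (\<forall>i<n. i < cnt f (i + 2))"
      using sorted_cnt[of "sort f"] l c by (auto simp: less_Suc_eq_le[symmetric])
    also have "\<dots> \<longleftrightarrow> (\<forall>k\<le>n. k \<le> cnt f (Suc k))"
    proof
      assume H: "\<forall>i<n. i < cnt f (i + 2)"
      show "\<forall>k\<le>n. k \<le> cnt f (Suc k)"
      proof (intro allI impI)
        fix k assume "k \<le> n"
        then show "k \<le> cnt f (Suc k)" using H[rule_format, of "k - 1"] by (cases k) auto
      qed
    next
      assume H: "\<forall>k\<le>n. k \<le> cnt f (Suc k)"
      show "\<forall>i<n. i < cnt f (i + 2)"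
        using H by (metis Suc_le_eq add_2_eq_Suc')
    qed
    finally show ?thesis .
  qed
  show ?thesis unfolding is_pf_def pfc_def using A B by blast
qed

lemma length_park[simp]: "length (park h) = length h"
  by (simp add: park_eq)

lemma cnt_lt_length: "v \<in> set h \<Longrightarrow> cnt h v < length h"
  unfolding cnt_def by (rule length_filter_less) auto

lemma park_vals: "x \<in> set (park h) \<Longrightarrow> 1 \<le> x \<and> x \<le> length h"
  unfolding park_eq using pv_ge1 pv_le_cnt cnt_lt_length
  by (auto) (metis Suc_leI add.commute le_trans plus_1_eq_Suc)

lemma cnt_map: "cnt (map \<phi> h) u = lf (\<lambda>x. \<phi> x < u) h"
  by (simp add: cnt_def filter_map comp_def)

lemma park_cnt: "k \<le> length h \<Longrightarrow> k \<le> cnt (park h) (Suc k)"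
proof -
  assume k: "k \<le> length h"
  let ?\<phi> = "pv h"
  have e: "cnt (park h) (Suc k) = lf (\<lambda>x. ?\<phi> x \<le> k) h"
    unfolding park_eq cnt_map by (simp add: less_Suc_eq_le)
  show ?thesis
  proof (cases "\<forall>x\<in>set h. ?\<phi> x \<le> k")
    case True
    then show ?thesis using e k by (simp add: filter_True)
  next
    case False
    then obtain x0 where x0: "k < ?\<phi> x0" by (auto simp: not_le)
    show ?thesis
    proof (cases "k = 0")
      case False
      define v0 where "v0 = (LEAST v. k < ?\<phi> v)"
      have v0: "k < ?\<phi> v0" unfolding v0_def using x0 by (rule LeastI)
      have nz: "v0 \<noteq> 0" using v0 False by (metis pv.simps(1) less_one not_less_eq)
      then obtain v1 where v1: "v0 = Suc v1" by (cases v0) auto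
      have "\<not> k < ?\<phi> v1" unfolding v0_def by (metis Suc_n_not_le_n not_less_Least v0_def v1 le_refl less_Suc_eq_le)
      then have "k \<le> cnt h v0" using v0 v1 by simp
      also have "cnt h v0 \<le> lf (\<lambda>x. ?\<phi> x \<le> k) h"
        unfolding cnt_def
        by (rule lf_mono) (metis not_less_Least v0_def not_le)
      finally show ?thesis using e by simp
    qed simp
  qed
qed

lemma pfc_park: "pfc (length h) (park h)"
  unfolding pfc_def using park_vals park_cnt by auto

lemma pv_step_cases: "pv h (Suc v) = pv h v + 1 \<or> pv h (Suc v) = cnt h (Suc v) + 1"
  by auto

lemma pv_less_imp: "pv h x < pv h y \<Longrightarrow> x < y"
  using pv_mono by (metis leD leI)

lemma R1: "pv (map (pv h) g) (pv h v) \<le> pv g v"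
proof (induction v)
  case 0
  have "cnt (map (pv h) g) 1 = 0" unfolding cnt_map using pv_ge1
    by (auto simp: filter_empty_conv) (metis Suc_le_eq)
  then show ?case by (simp add: numeral_eq_Suc)
next
  case (Suc v)
  let ?g = "map (pv h) g"
  have a: "pv ?g (pv h (Suc v)) \<le> pv ?g (pv h v) + 1"
  proof (cases "pv h (Suc v) = pv h v")
    case False
    then have "pv h (Suc v) = Suc (pv h v)" using pv_Suc_ge[of h v] pv_Suc_le[of h v] by simp
    then show ?thesis by simp
  qed (simp del: pv.simps)
  have b: "pv ?g (pv h (Suc v)) \<le> cnt ?g (pv h (Suc v)) + 1" by (rule pv_le_cnt)
  have c: "cnt ?g (pv h (Suc v)) \<le> cnt g (Suc v)"
    unfolding cnt_map unfolding cnt_def by (intro lf_mono ballI impI) (erule pv_less_imp)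
  show ?case using a b c Suc.IH by simp
qed

lemma pv_attain: "\<exists>w\<le>y. pv h y = y - w + 1 + cnt h w"
proof (induction y)
  case 0 then show ?case by simp
next
  case (Suc y)
  then obtain w where w: "w \<le> y" "pv h y = y - w + 1 + cnt h w" by auto
  show ?case
  proof (cases "pv h (Suc y) = pv h y + 1")
    case True
    then show ?thesis using w by (intro exI[of _ w]) auto
  next
    case False
    then have "pv h (Suc y) = cnt h (Suc y) + 1" by auto
    then show ?thesis by (intro exI[of _ "Suc y"]) auto
  qed
qed

lemma R2claim:
  assumes sub: "mset g \<subseteq># mset h"
  shows "w \<le> pv h v \<Longrightarrow> pv g v \<le> pv h v - w + 1 + cnt (map (pv h) g) w"
proof (induction v arbitrary: w)
  case 0
  then show ?case by simp
next
  case (Suc v)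
  let ?\<phi> = "pv h"
  let ?C = "cnt (map ?\<phi> g) w"
  show ?case
  proof (cases "?\<phi> (Suc v) = ?\<phi> v + 1")
    case True
    show ?thesis
    proof (cases "w \<le> ?\<phi> v")
      case True
      then have "pv g v \<le> ?\<phi> v - w + 1 + ?C" using Suc.IH by blast
      then show ?thesis using \<open>?\<phi> (Suc v) = ?\<phi> v + 1\<close> True by simp
    next
      case False
      then have w: "w = ?\<phi> (Suc v)" using Suc.prems True by simp
      have "cnt g (Suc v) \<le> ?C"
        unfolding w cnt_map unfolding cnt_def
        by (intro lf_mono ballI impI) (metis True pv_mono less_Suc_eq_le le_imp_less_Suc add.commute plus_1_eq_Suc)
      moreover have "pv g (Suc v) \<le> cnt g (Suc v) + 1" by (rule pv_le_cnt)
      ultimately show ?thesis using w by simp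
    qed
  next
    case False
    then have ph: "?\<phi> (Suc v) = cnt h (Suc v) + 1" by auto
    define A where "A = cnt g (Suc v)"
    define A1 where "A1 = lf (\<lambda>x. x < Suc v \<and> ?\<phi> x < w) g"
    define A2 where "A2 = lf (\<lambda>x. x < Suc v \<and> \<not> ?\<phi> x < w) g"
    define H where "H = cnt h (Suc v)"
    define H1 where "H1 = lf (\<lambda>x. x < Suc v \<and> ?\<phi> x < w) h"
    define H2 where "H2 = lf (\<lambda>x. x < Suc v \<and> \<not> ?\<phi> x < w) h"
    define Hw where "Hw = lf (\<lambda>x. ?\<phi> x < w) h"
    have e1: "A = A1 + A2" unfolding A_def A1_def A2_def cnt_def by (rule lf_split)
    have e2: "H = H1 + H2" unfolding H_def H1_def H2_def cnt_def by (rule lf_split)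
    have i1: "A1 \<le> ?C" unfolding A1_def cnt_map by (rule lf_mono) auto
    have i2: "A2 \<le> H2" unfolding A2_def H2_def by (rule lf_sub[OF sub])
    have e3: "H1 = Hw" unfolding H1_def Hw_def
    proof (rule lf_cong, intro ballI)
      fix x assume "x \<in> set h"
      show "(x < Suc v \<and> ?\<phi> x < w) = (?\<phi> x < w)"
        using Suc.prems pv_less_imp[of h x "Suc v"] by auto
    qed
    have wle: "w - 1 \<le> length h"
      using Suc.prems ph cnt_le_length[of h "Suc v"] by simp
    have i3: "w - 1 \<le> Hw"
    proof (cases w)
      case (Suc w')
      then show ?thesis using park_cnt[of w' h] wle unfolding Hw_def park_eq cnt_map by simp
    qed simp
    have "pv g (Suc v) \<le> A + 1" unfolding A_def by (rule pv_le_cnt)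
    then show ?thesis using e1 e2 e3 i1 i2 i3 ph Suc.prems unfolding H_def[symmetric] by linarith
  qed
qed

lemma park_R:
  assumes sub: "mset g \<subseteq># mset h"
  shows "park (map (pv h) g) = park g"
proof -
  have "pv (map (pv h) g) (pv h v) = pv g v" for v
  proof (rule antisym)
    show "pv (map (pv h) g) (pv h v) \<le> pv g v" by (rule R1)
    obtain w where w: "w \<le> pv h v" "pv (map (pv h) g) (pv h v) = pv h v - w + 1 + cnt (map (pv h) g) w"
      using pv_attain by blast
    show "pv g v \<le> pv (map (pv h) g) (pv h v)" using R2claim[OF sub w(1)] w(2) by simp
  qed
  then show ?thesis unfolding park_eq by simp
qed


lemma perm_mset: "is_perm n \<sigma> \<Longrightarrow> mset \<sigma> = mset [1..<n+1]"
  unfolding is_perm_def by (metis atLeastLessThanSuc_atLeastAtMost distinct_upt set_eq_iff_mset_eq_distinct set_upt Suc_eq_plus1)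

lemma map_upt_nth: "map (\<lambda>i. u ! (i - 1)) [1..<length u + 1] = u"
  by (rule nth_equalityI) (simp_all del: upt_Suc)

lemma mset_comp_w: "is_perm (length u) \<sigma> \<Longrightarrow> mset (comp_w u \<sigma>) = mset u"
proof -
  assume p: "is_perm (length u) \<sigma>"
  have "mset (comp_w u \<sigma>) = image_mset (\<lambda>i. u ! (i - 1)) (mset \<sigma>)" by (simp add: comp_w_def)
  also have "\<dots> = image_mset (\<lambda>i. u ! (i - 1)) (mset [1..<length u + 1])" using perm_mset[OF p] by simp
  also have "\<dots> = mset (map (\<lambda>i. u ! (i - 1)) [1..<length u + 1])" by simp
  also have "\<dots> = mset u" using map_upt_nth by metis
  finally show ?thesis .
qed

lemma park_comp_w: "is_perm (length u) \<sigma> \<Longrightarrow> park (comp_w u \<sigma>) = comp_w (park u) \<sigma>"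
proof -
  assume p: "is_perm (length u) \<sigma>"
  have pvs: "pv (comp_w u \<sigma>) = pv u" using mset_comp_w[OF p] by (rule pv_mset)
  have r: "\<forall>i\<in>set \<sigma>. 1 \<le> i \<and> i \<le> length u" using p unfolding is_perm_def by auto
  show ?thesis unfolding park_eq pvs
    using r by (auto simp: comp_w_def)
qed

lemma cnt_append: "cnt (a @ b) u = cnt a u + cnt b u"
  by (simp add: cnt_def)

lemma cnt_shift: "cnt (map (\<lambda>i. i + n) b) u = cnt b (u - n)"
  by (induction b) (auto simp: cnt_def)

lemma pv_ge: "(\<forall>u\<le>v. L \<le> v - u + 1 + cnt h u) \<Longrightarrow> L \<le> pv h v"
proof (induction v arbitrary: L)
  case 0 then show ?case by simp
next
  case (Suc v)
  have "\<forall>u\<le>v. L - 1 \<le> v - u + 1 + cnt h u"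
  proof (intro allI impI)
    fix u assume "u \<le> v"
    then have "L \<le> Suc v - u + 1 + cnt h u" using Suc.prems by simp
    then show "L - 1 \<le> v - u + 1 + cnt h u" using \<open>u \<le> v\<close> by simp
  qed
  then have "L - 1 \<le> pv h v" by (rule Suc.IH)
  moreover have "L \<le> cnt h (Suc v) + 1" using Suc.prems by force
  ultimately show ?case by simp
qed

lemma cnt_all: "\<forall>x\<in>set a. x < u \<Longrightarrow> cnt a u = length a"
  by (simp add: cnt_def)

lemma cnt_none: "\<forall>x\<in>set a. u \<le> x \<Longrightarrow> cnt a u = 0"
  by (auto simp: cnt_def filter_empty_conv)

lemma park_append:
  assumes a1: "\<forall>x\<in>set a. 1 \<le> x \<and> x \<le> n" and a2: "length a \<le> n"
    and a3: "\<forall>k\<le>n. k \<le> cnt a (Suc k) + (n - length a)"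
    and b1: "\<forall>x\<in>set b. 1 \<le> x"
  shows "park (a @ map (\<lambda>i. i + n) b) = times_w (park a) (park b)"
proof -
  let ?c = "a @ map (\<lambda>i. i + n) b"
  have cc: "cnt ?c u = cnt a u + cnt b (u - n)" for u
    by (simp add: cnt_append cnt_shift)
  have low: "pv ?c v = pv a v" if "v \<le> Suc n" for v
  proof (rule pv_cong, intro allI impI)
    fix u assume "u \<le> v"
    then have "cnt b (u - n) = 0" using that b1 by (intro cnt_none) auto
    then show "cnt ?c u = cnt a u" using cc by simp
  qed
  have caS: "cnt a (Suc n + t) = length a" for t using a1 by (intro cnt_all) auto
  have base: "pv a (Suc n) = length a + 1"
  proof (rule antisym)
    show "pv a (Suc n) \<le> length a + 1" using pv_le_cnt[of a "Suc n"] caS[of 0] by simp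
    show "length a + 1 \<le> pv a (Suc n)"
    proof (rule pv_ge, intro allI impI)
      fix u assume u: "u \<le> Suc n"
      show "length a + 1 \<le> Suc n - u + 1 + cnt a u"
      proof (cases u)
        case 0 then show ?thesis using a2 by simp
      next
        case (Suc k)
        then show ?thesis using a3[rule_format, of k] u a2 by simp
      qed
    qed
  qed
  have pb1: "pv b 1 = 1"
  proof -
    have "cnt b 1 = 0" using b1 by (intro cnt_none) auto
    then show ?thesis by (simp add: numeral_eq_Suc)
  qed
  have high: "pv ?c (n + t) = length a + pv b t" if "1 \<le> t" for t
    using that
  proof (induction t)
    case 0 then show ?case by simp
  next
    case (Suc t)
    show ?case
    proof (cases "t = 0")
      case True
      then show ?thesis using low[of "Suc n"] base pb1 by simp
    next
      case False
      then have IH: "pv ?c (n + t) = length a + pv b t" using Suc by simp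
      have "cnt ?c (Suc (n + t)) = length a + cnt b (Suc t)"
        using cc caS[of t] by (simp add: Suc_diff_le)
      then show ?thesis using IH by simp
    qed
  qed
  have "park ?c = map (pv ?c) a @ map (\<lambda>x. pv ?c (x + n)) b"
    unfolding park_eq by simp
  also have "\<dots> = map (pv a) a @ map (\<lambda>x. length a + pv b x) b"
  proof -
    have "map (pv ?c) a = map (pv a) a" using low a1 by (intro map_cong) auto
    moreover have "map (\<lambda>x. pv ?c (x + n)) b = map (\<lambda>x. length a + pv b x) b"
      using high b1 by (intro map_cong) (auto simp: add.commute)
    ultimately show ?thesis by simp
  qed
  also have "\<dots> = times_w (park a) (park b)"
    unfolding times_w_def park_eq by (simp add: comp_def add.commute)
  finally show ?thesis .
qed

lemma pv_id: "pfc n f \<Longrightarrow> 1 \<le> v \<Longrightarrow> v \<le> Suc n \<Longrightarrow> pv f v = v"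
proof (induction v)
  case 0 then show ?case by simp
next
  case (Suc v)
  show ?case
  proof (cases "v = 0")
    case True
    have "cnt f 1 = 0" using Suc.prems(1) unfolding pfc_def by (intro cnt_none) auto
    then show ?thesis using True by (simp add: numeral_eq_Suc)
  next
    case False
    then have "pv f v = v" using Suc by simp
    moreover have "v \<le> cnt f (Suc v)" using Suc.prems unfolding pfc_def by simp
    ultimately show ?thesis by simp
  qed
qed

lemma park_pf: "pfc n f \<Longrightarrow> park f = f"
proof -
  assume p: "pfc n f"
  have "map (pv f) f = f"
    by (rule map_idI) (metis p pfc_def pv_id le_SucI)
  then show ?thesis by (simp add: park_eq)
qed

lemma park_Nil[simp]: "park [] = []"
  by (simp add: park_eq)

lemma sub_pf:
  assumes "pfc n (a @ b)"
  shows "(\<forall>x\<in>set a. 1 \<le> x \<and> x \<le> n) \<and> length a \<le> n \<and> (\<forall>k\<le>n. k \<le> cnt a (Suc k) + (n - length a))"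
    and "(\<forall>x\<in>set b. 1 \<le> x \<and> x \<le> n) \<and> length b \<le> n \<and> (\<forall>k\<le>n. k \<le> cnt b (Suc k) + (n - length b))"
proof -
  have l: "length a + length b = n" using assms unfolding pfc_def by simp
  have c: "\<forall>k\<le>n. k \<le> cnt a (Suc k) + cnt b (Suc k)" using assms unfolding pfc_def by (simp add: cnt_append)
  show "(\<forall>x\<in>set a. 1 \<le> x \<and> x \<le> n) \<and> length a \<le> n \<and> (\<forall>k\<le>n. k \<le> cnt a (Suc k) + (n - length a))"
    using assms l c cnt_le_length[of b] unfolding pfc_def
    by (auto) (metis add_le_mono le_refl le_trans diff_add_inverse)
  show "(\<forall>x\<in>set b. 1 \<le> x \<and> x \<le> n) \<and> length b \<le> n \<and> (\<forall>k\<le>n. k \<le> cnt b (Suc k) + (n - length b))"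
    using assms l c cnt_le_length[of a] unfolding pfc_def
    by (auto) (metis add.commute add_le_mono le_refl le_trans diff_add_inverse)
qed


declare upt_Suc[simp del]


lemma filter_sorted:
  "(\<forall>p q. p < q \<and> q < length xs \<and> P (xs ! p) \<and> P (xs ! q) \<longrightarrow> xs ! p < xs ! q)
   \<Longrightarrow> sorted_wrt (<) (filter P xs)"
proof (induction xs)
  case Nil then show ?case by simp
next
  case (Cons x xs)
  have IH: "sorted_wrt (<) (filter P xs)"
  proof (rule Cons.IH, intro allI impI)
    fix p q assume "p < q \<and> q < length xs \<and> P (xs ! p) \<and> P (xs ! q)"
    then show "xs ! p < xs ! q" using Cons.prems[rule_format, of "Suc p" "Suc q"] by simp
  qed
  have "\<forall>y\<in>set xs. P x \<longrightarrow> P y \<longrightarrow> x < y"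
  proof (intro ballI impI)
    fix y assume "y \<in> set xs" "P x" "P y"
    then obtain q where "q < length xs" "xs ! q = y" by (metis in_set_conv_nth)
    then show "x < y" using Cons.prems[rule_format, of 0 "Suc q"] \<open>P x\<close> \<open>P y\<close> by simp
  qed
  then show ?case using IH by auto
qed

lemma Sh_perm: "\<gamma> \<in> Sh n m \<Longrightarrow> is_perm (n + m) \<gamma>"
  by (simp add: Sh_def)

lemma Sh_length: "\<gamma> \<in> Sh n m \<Longrightarrow> length \<gamma> = n + m"
  using Sh_perm is_perm_length by blast

lemma Sh_ord: "\<gamma> \<in> Sh n m \<Longrightarrow> p < q \<Longrightarrow> q < length \<gamma> \<Longrightarrow> (\<gamma> ! p \<le> n \<longleftrightarrow> \<gamma> ! q \<le> n) \<Longrightarrow> \<gamma> ! p < \<gamma> ! q"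
  by (simp add: Sh_def)

lemma Sh_filter1: "\<gamma> \<in> Sh n m \<Longrightarrow> filter (\<lambda>v. v \<le> n) \<gamma> = [1..<n+1]"
proof -
  assume g: "\<gamma> \<in> Sh n m"
  have s: "sorted_wrt (<) (filter (\<lambda>v. v \<le> n) \<gamma>)"
    by (rule filter_sorted) (auto intro: Sh_ord[OF g])
  have st: "set (filter (\<lambda>v. v \<le> n) \<gamma>) = set [1..<n+1]"
    using Sh_perm[OF g] unfolding is_perm_def by auto
  have "sorted (filter (\<lambda>v. v \<le> n) \<gamma>)" "distinct (filter (\<lambda>v. v \<le> n) \<gamma>)" using s by (simp_all add: strict_sorted_iff)
  then show ?thesis using st by (intro sorted_distinct_set_unique) (simp_all del: upt_Suc)
qed

lemma Sh_filter2: "\<gamma> \<in> Sh n m \<Longrightarrow> filter (\<lambda>v. \<not> v \<le> n) \<gamma> = [n+1..<n+m+1]"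
proof -
  assume g: "\<gamma> \<in> Sh n m"
  have s: "sorted_wrt (<) (filter (\<lambda>v. \<not> v \<le> n) \<gamma>)"
    by (rule filter_sorted) (auto intro: Sh_ord[OF g])
  have st: "set (filter (\<lambda>v. \<not> v \<le> n) \<gamma>) = set [n+1..<n+m+1]"
    using Sh_perm[OF g] unfolding is_perm_def by auto
  have "sorted (filter (\<lambda>v. \<not> v \<le> n) \<gamma>)" "distinct (filter (\<lambda>v. \<not> v \<le> n) \<gamma>)" using s by (simp_all add: strict_sorted_iff)
  then show ?thesis using st by (intro sorted_distinct_set_unique) (simp_all del: upt_Suc)
qed

lemma split_upt: "A @ B = [a..<b] \<Longrightarrow> a \<le> b \<Longrightarrow> A = [a..<a + length A] \<and> B = [a + length A..<b]"
proof -
  assume e: "A @ B = [a..<b]" and ab: "a \<le> b"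
  have "A = take (length A) [a..<b]" using e by (metis append_eq_conv_conj)
  moreover have "B = drop (length A) [a..<b]" using e by (metis append_eq_conv_conj)
  moreover have "length A \<le> b - a" using e by (metis le_add1 length_append length_upt)
  moreover have "a + length A \<le> b" using e by (metis le_add1 length_append length_upt le_diff_conv2 add.commute ab)
  ultimately show ?thesis by (simp add: take_upt drop_upt min_def del: upt_Suc)
qed

locale shd =
  fixes \<gamma> n m r
  assumes g: "\<gamma> \<in> Sh n m" and r: "r \<le> n + m"
begin

definition n1 where "n1 = sh_n1 \<gamma> n r"
definition m1 where "m1 = r - n1"

lemma lenT: "length (take r \<gamma>) = r" using Sh_length[OF g] r by simp
lemma lenD: "length (drop r \<gamma>) = n + m - r" using Sh_length[OF g] r by simp

lemma fT1_len: "length (filter (\<lambda>v. v \<le> n) (take r \<gamma>)) = n1"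
  by (simp add: n1_def sh_n1_def)

lemma fT2_len: "length (filter (\<lambda>v. \<not> v \<le> n) (take r \<gamma>)) = m1"
  using sum_length_filter_compl[of "\<lambda>v. v \<le> n" "take r \<gamma>"] lenT fT1_len m1_def by simp

lemma F1: "filter (\<lambda>v. v \<le> n) (take r \<gamma>) = [1..<1+n1] \<and> filter (\<lambda>v. v \<le> n) (drop r \<gamma>) = [1+n1..<n+1]"
proof -
  have "filter (\<lambda>v. v \<le> n) (take r \<gamma>) @ filter (\<lambda>v. v \<le> n) (drop r \<gamma>) = [1..<n+1]"
    using Sh_filter1[OF g] by (metis append_take_drop_id filter_append)
  then show ?thesis using split_upt fT1_len by fastforce
qed

lemma F2: "filter (\<lambda>v. \<not> v \<le> n) (take r \<gamma>) = [n+1..<n+1+m1] \<and> filter (\<lambda>v. \<not> v \<le> n) (drop r \<gamma>) = [n+1+m1..<n+m+1]"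
proof -
  have "filter (\<lambda>v. \<not> v \<le> n) (take r \<gamma>) @ filter (\<lambda>v. \<not> v \<le> n) (drop r \<gamma>) = [n+1..<n+m+1]"
    using Sh_filter2[OF g] by (metis append_take_drop_id filter_append)
  then show ?thesis using split_upt fT2_len by fastforce
qed

lemma n1_le: "n1 \<le> n"
proof -
  have "length (filter (\<lambda>v. v \<le> n) (take r \<gamma>)) \<le> length (filter (\<lambda>v. v \<le> n) \<gamma>)"
    by (metis append_take_drop_id filter_append le_add1 length_append)
  then show ?thesis using Sh_filter1[OF g] fT1_len by simp
qed

lemma m1_le: "m1 \<le> m"
proof -
  have "length (filter (\<lambda>v. \<not> v \<le> n) (take r \<gamma>)) \<le> length (filter (\<lambda>v. \<not> v \<le> n) \<gamma>)"
    by (metis append_take_drop_id filter_append le_add1 length_append)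
  then show ?thesis using Sh_filter2[OF g] fT2_len by simp
qed

lemma r_eq: "r = n1 + m1" using m1_def fT1_len lenT
  by (metis add_diff_inverse_nat length_filter_le not_less)

lemma setT: "v \<in> set (take r \<gamma>) \<Longrightarrow> 1 \<le> v \<and> (v \<le> n \<longrightarrow> v \<le> n1) \<and> (\<not> v \<le> n \<longrightarrow> v \<le> n + m1)"
proof -
  assume v: "v \<in> set (take r \<gamma>)"
  show ?thesis
  proof (cases "v \<le> n")
    case True
    then have "v \<in> set (filter (\<lambda>v. v \<le> n) (take r \<gamma>))" using v by simp
    then show ?thesis using F1 True by auto
  next
    case False
    then have "v \<in> set (filter (\<lambda>v. \<not> v \<le> n) (take r \<gamma>))" using v by simp
    then show ?thesis using F2 False by auto
  qed
qed

lemma setD: "v \<in> set (drop r \<gamma>) \<Longrightarrow> (v \<le> n \<longrightarrow> n1 < v) \<and> (\<not> v \<le> n \<longrightarrow> n + m1 < v \<and> v \<le> n + m)"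
proof -
  assume v: "v \<in> set (drop r \<gamma>)"
  show ?thesis
  proof (cases "v \<le> n")
    case True
    then have "v \<in> set (filter (\<lambda>v. v \<le> n) (drop r \<gamma>))" using v by simp
    then show ?thesis using F1 True by auto
  next
    case False
    then have "v \<in> set (filter (\<lambda>v. \<not> v \<le> n) (drop r \<gamma>))" using v by simp
    then show ?thesis using F2 False by auto
  qed
qed

definition psi1 where "psi1 v = (if v \<le> n then v else v - n + n1)"
definition psi2 where "psi2 v = (if v \<le> n then v - n1 else v - n1 - m1)"

definition g1 where "g1 = map psi1 (take r \<gamma>)"
definition g2 where "g2 = map psi2 (drop r \<gamma>)"

lemma dist_g: "distinct \<gamma>" using Sh_perm[OF g] by (simp add: is_perm_def)

lemma perm_from: "distinct xs \<Longrightarrow> length xs = k \<Longrightarrow> set xs \<subseteq> {1..k} \<Longrightarrow> is_perm k xs"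
  unfolding is_perm_def
  by (metis card_atLeastAtMost card_subset_eq distinct_card finite_atLeastAtMost diff_Suc_1)

lemma g1_Sh: "g1 \<in> Sh n1 m1"
proof -
  have inj: "inj_on psi1 (set (take r \<gamma>))"
  proof (rule inj_onI)
    fix x y assume x: "x \<in> set (take r \<gamma>)" and y: "y \<in> set (take r \<gamma>)" and e: "psi1 x = psi1 y"
    show "x = y" using setT[OF x] setT[OF y] e n1_le unfolding psi1_def by (auto split: if_splits)
  qed
  have d: "distinct g1" unfolding g1_def using inj dist_g by (simp add: distinct_map distinct_take)
  have l: "length g1 = n1 + m1" unfolding g1_def using lenT r_eq by simp
  have s: "set g1 \<subseteq> {1..n1 + m1}"
  proof
    fix y assume "y \<in> set g1"
    then obtain v where v: "v \<in> set (take r \<gamma>)" "y = psi1 v" unfolding g1_def by auto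
    then show "y \<in> {1..n1 + m1}" using setT[OF v(1)] n1_le unfolding psi1_def by auto
  qed
  have p: "is_perm (n1 + m1) g1" using perm_from d l s by blast
  have blk: "v \<in> set (take r \<gamma>) \<Longrightarrow> (psi1 v \<le> n1 \<longleftrightarrow> v \<le> n)" for v
    unfolding psi1_def using setT by auto
  have o: "g1 ! p < g1 ! q" if pq: "p < q" "q < length g1" "(g1 ! p \<le> n1) = (g1 ! q \<le> n1)" for p q
  proof -
    have qr: "q < r" using pq l r_eq by simp
    have gp: "g1 ! p = psi1 (\<gamma> ! p)" "g1 ! q = psi1 (\<gamma> ! q)" unfolding g1_def using pq qr lenT by auto
    have mem: "\<gamma> ! p \<in> set (take r \<gamma>)" "\<gamma> ! q \<in> set (take r \<gamma>)"
      using nth_mem[of p "take r \<gamma>"] nth_mem[of q "take r \<gamma>"] pq qr lenT by simp_all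
    have "(\<gamma> ! p \<le> n) = (\<gamma> ! q \<le> n)" using blk mem pq(3) gp by simp
    then have "\<gamma> ! p < \<gamma> ! q" using Sh_ord[OF g pq(1)] qr lenT by simp
    then show ?thesis using gp unfolding psi1_def using \<open>(\<gamma> ! p \<le> n) = (\<gamma> ! q \<le> n)\<close> mem setT by auto
  qed
  show ?thesis unfolding Sh_def using p o by blast
qed

lemma g2_Sh: "g2 \<in> Sh (n - n1) (m - m1)"
proof -
  have inj: "inj_on psi2 (set (drop r \<gamma>))"
  proof (rule inj_onI)
    fix x y assume x: "x \<in> set (drop r \<gamma>)" and y: "y \<in> set (drop r \<gamma>)" and e: "psi2 x = psi2 y"
    show "x = y" using setD[OF x] setD[OF y] e n1_le unfolding psi2_def by (auto split: if_splits)
  qed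
  have d: "distinct g2" unfolding g2_def using inj dist_g by (simp add: distinct_map distinct_drop)
  have l: "length g2 = (n - n1) + (m - m1)" unfolding g2_def using lenD r_eq n1_le m1_le by simp
  have s: "set g2 \<subseteq> {1..(n - n1) + (m - m1)}"
  proof
    fix y assume "y \<in> set g2"
    then obtain v where v: "v \<in> set (drop r \<gamma>)" "y = psi2 v" unfolding g2_def by auto
    then show "y \<in> {1..(n - n1) + (m - m1)}" using setD[OF v(1)] n1_le m1_le unfolding psi2_def by auto
  qed
  have p: "is_perm ((n - n1) + (m - m1)) g2" using perm_from d l s by blast
  have blk: "v \<in> set (drop r \<gamma>) \<Longrightarrow> (psi2 v \<le> n - n1 \<longleftrightarrow> v \<le> n)" for v
    unfolding psi2_def using setD n1_le by fastforce
  have o: "g2 ! p < g2 ! q" if pq: "p < q" "q < length g2" "(g2 ! p \<le> n - n1) = (g2 ! q \<le> n - n1)" for p q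
  proof -
    have qr: "r + q < n + m" using pq l r_eq n1_le m1_le by simp
    have pl: "q < length (drop r \<gamma>)" "p < length (drop r \<gamma>)" using pq l lenD r_eq n1_le m1_le by simp_all
    have gp: "g2 ! p = psi2 (\<gamma> ! (r + p))" "g2 ! q = psi2 (\<gamma> ! (r + q))"
      unfolding g2_def using pl r Sh_length[OF g] by simp_all
    have mem: "\<gamma> ! (r + p) \<in> set (drop r \<gamma>)" "\<gamma> ! (r + q) \<in> set (drop r \<gamma>)"
      using nth_mem[of p "drop r \<gamma>"] nth_mem[of q "drop r \<gamma>"] pq qr lenD l by simp_all
    have "(\<gamma> ! (r + p) \<le> n) = (\<gamma> ! (r + q) \<le> n)" using blk mem pq(3) gp by simp
    then have "\<gamma> ! (r + p) < \<gamma> ! (r + q)" using Sh_ord[OF g, of "r + p" "r + q"] pq(1) qr Sh_length[OF g] by simp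
    then show ?thesis using gp unfolding psi2_def using \<open>(\<gamma> ! (r + p) \<le> n) = (\<gamma> ! (r + q) \<le> n)\<close> setD[OF mem(1)] setD[OF mem(2)] n1_le by auto
  qed
  show ?thesis unfolding Sh_def using p o by blast
qed

end


lemma length_times_w[simp]: "length (times_w a b) = length a + length b"
  by (simp add: times_w_def)

lemma times_w_nth: "k < length a + length b \<Longrightarrow>
  times_w a b ! k = (if k < length a then a ! k else b ! (k - length a) + length a)"
  by (simp add: times_w_def nth_append)

lemma length_idp[simp]: "length (idp n) = n" by (simp add: idp_def)
lemma idp_nth: "k < n \<Longrightarrow> idp n ! k = Suc k" by (simp add: idp_def)
lemma length_eps[simp]: "length (eps a b) = a + b" by (simp add: eps_def)
lemma eps_nth: "k < a + b \<Longrightarrow> eps a b ! k = (if k < b then a + k + 1 else k - b + 1)"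
  by (simp add: eps_def nth_append)

context shd
begin

definition piw where "piw = times_w (times_w (idp n1) (eps (n - n1) m1)) (idp (m - m1))"

lemma length_piw: "length piw = n + m"
  using n1_le m1_le by (simp add: piw_def)

lemma pi_nth: "k < n + m \<Longrightarrow> piw ! k =
  (if k < n1 then k + 1 else if k < n1 + m1 then n + (k - n1) + 1 else if k < n + m1 then k - m1 + 1 else k + 1)"
proof -
  assume k: "k < n + m"
  have l1: "length (times_w (idp n1) (eps (n - n1) m1)) = n + m1" using n1_le by simp
  show ?thesis
  proof (cases "k < n + m1")
    case True
    then have "piw ! k = times_w (idp n1) (eps (n - n1) m1) ! k"
      unfolding piw_def using l1 k m1_le by (simp add: times_w_nth)
    also have "\<dots> = (if k < n1 then k + 1 else eps (n - n1) m1 ! (k - n1) + n1)"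
      using True n1_le by (simp add: times_w_nth idp_nth)
    finally show ?thesis using True n1_le by (auto simp: eps_nth)
  next
    case False
    then have "piw ! k = idp (m - m1) ! (k - (n + m1)) + (n + m1)"
      unfolding piw_def using l1 k m1_le by (simp add: times_w_nth)
    then show ?thesis using False k n1_le by (simp add: idp_nth)
  qed
qed

definition piinv where "piinv v = (if v \<le> n1 then v else if v \<le> n then v + m1 else if v \<le> n + m1 then v - n + n1 else v)"

lemma piinv_inv: "1 \<le> v \<Longrightarrow> v \<le> n + m \<Longrightarrow> 1 \<le> piinv v \<and> piinv v \<le> n + m \<and> piw ! (piinv v - 1) = v"
proof -
  assume v: "1 \<le> v" "v \<le> n + m"
  have b: "1 \<le> piinv v \<and> piinv v \<le> n + m" unfolding piinv_def using v n1_le m1_le by auto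
  then have "piw ! (piinv v - 1) = v" using pi_nth[of "piinv v - 1"] v n1_le m1_le
    unfolding piinv_def by (auto split: if_splits)
  then show ?thesis using b by simp
qed

lemma piinv_inv2: "1 \<le> a \<Longrightarrow> a \<le> n + m \<Longrightarrow> piinv (piw ! (a - 1)) = a"
  using pi_nth[of "a - 1"] n1_le m1_le unfolding piinv_def by (auto split: if_splits)

lemma g12_eq: "times_w g1 g2 = map piinv \<gamma>"
proof -
  have "map psi1 (take r \<gamma>) = map piinv (take r \<gamma>)"
  proof (rule map_cong[OF refl])
    fix v assume "v \<in> set (take r \<gamma>)"
    then show "psi1 v = piinv v" using setT[of v] n1_le unfolding psi1_def piinv_def by auto
  qed
  moreover have "map (\<lambda>x. x + r) (map psi2 (drop r \<gamma>)) = map piinv (drop r \<gamma>)"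
  proof -
    have "psi2 v + r = piinv v" if "v \<in> set (drop r \<gamma>)" for v
      using setD[OF that] n1_le r_eq unfolding psi2_def piinv_def by auto
    then show ?thesis by simp
  qed
  moreover have "length g1 = r" unfolding g1_def using lenT by simp
  ultimately show ?thesis unfolding times_w_def g1_def g2_def
    by (metis append_take_drop_id map_append)
qed

lemma gamma_range: "v \<in> set \<gamma> \<Longrightarrow> 1 \<le> v \<and> v \<le> n + m"
  using Sh_perm[OF g] unfolding is_perm_def by auto

lemma decomp_eq: "\<gamma> = comp_w piw (times_w g1 g2)"
  unfolding g12_eq comp_w_def using piinv_inv gamma_range
  by (simp add: map_idI)

lemma decomp_unique:
  assumes "g1' \<in> Sh n1 m1" "g2' \<in> Sh (n - n1) (m - m1)" "\<gamma> = comp_w piw (times_w g1' g2')"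
  shows "g1' = g1 \<and> g2' = g2"
proof -
  let ?X = "times_w g1' g2'"
  have lg1: "length g1' = r" using Sh_length[OF assms(1)] r_eq by simp
  have rng: "\<forall>x\<in>set ?X. 1 \<le> x \<and> x \<le> n + m"
    using Sh_perm[OF assms(1)] Sh_perm[OF assms(2)] n1_le m1_le lg1 r_eq unfolding is_perm_def times_w_def
    by auto
  have "map piinv \<gamma> = map piinv (comp_w piw ?X)"
    using assms(3) by simp
  also have "\<dots> = map (\<lambda>x. piinv (piw ! (x - 1))) ?X"
    by (simp add: comp_w_def comp_def)
  also have "\<dots> = ?X" using rng piinv_inv2 by (simp add: map_idI)
  finally have X: "?X = times_w g1 g2" using g12_eq by simp
  have lg: "length g1 = r" unfolding g1_def using lenT by simp
  have "g1' = g1" using X lg lg1 unfolding times_w_def by simp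
  moreover have "g2' = g2"
  proof -
    have "map (\<lambda>i. i + r) g2' = map (\<lambda>i. i + r) g2" using X lg lg1 unfolding times_w_def by simp
    then show ?thesis by (simp add: inj_map_eq_map inj_on_def)
  qed
  ultimately show ?thesis by simp
qed

lemma sh_decomp_val: "sh_decomp \<gamma> n m r = (g1, g2)"
proof -
  have "(THE (a, b). a \<in> Sh n1 m1 \<and> b \<in> Sh (n - n1) (m - m1) \<and>
       \<gamma> = comp_w piw (times_w a b)) = (g1, g2)"
  proof (rule the_equality)
    show "case (g1, g2) of (a, b) \<Rightarrow> a \<in> Sh n1 m1 \<and> b \<in> Sh (n - n1) (m - m1) \<and>
       \<gamma> = comp_w piw (times_w a b)"
      unfolding prod.case using g1_Sh g2_Sh decomp_eq by blast
  next
    fix x assume H: "case x of (a, b) \<Rightarrow> a \<in> Sh n1 m1 \<and> b \<in> Sh (n - n1) (m - m1) \<and>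
       \<gamma> = comp_w piw (times_w a b)"
    obtain a b where x: "x = (a, b)" by (cases x)
    have H': "a \<in> Sh n1 m1 \<and> b \<in> Sh (n - n1) (m - m1) \<and> \<gamma> = comp_w piw (times_w a b)"
      using H unfolding x prod.case .
    show "x = (g1, g2)" using decomp_unique[of a b] H' x by blast
  qed
  then show ?thesis unfolding sh_decomp_def Let_def n1_def[symmetric] m1_def[symmetric]
    piw_def[symmetric] .
qed

lemma take_word:
  assumes "length f = n" "length h = m"
  shows "take r (comp_w (times_w f h) \<gamma>) = comp_w (take n1 f @ map (\<lambda>i. i + n) (take m1 h)) g1"
proof -
  let ?u = "take n1 f @ map (\<lambda>i. i + n) (take m1 h)"
  have "take r (comp_w (times_w f h) \<gamma>) = map (\<lambda>v. times_w f h ! (v - 1)) (take r \<gamma>)"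
    by (simp add: comp_w_def take_map)
  also have "\<dots> = map (\<lambda>v. ?u ! (psi1 v - 1)) (take r \<gamma>)"
  proof (rule map_cong[OF refl])
    fix v assume v: "v \<in> set (take r \<gamma>)"
    note s = setT[OF v]
    have vv: "v \<le> n + m" using v gamma_range by (meson in_set_takeD)
    show "times_w f h ! (v - 1) = ?u ! (psi1 v - 1)"
    proof (cases "v \<le> n")
      case True
      then have v1: "1 \<le> v" "v \<le> n1" using s by auto
      have "v - 1 < length f" using v1 n1_le assms by linarith
      then have e1: "times_w f h ! (v - 1) = f ! (v - 1)" using times_w_nth[of "v - 1" f h] by simp
      have i: "v - 1 < length (take n1 f)" using v1 assms n1_le by simp
      have e2: "?u ! (v - 1) = f ! (v - 1)" using nth_append[of "take n1 f" _ "v - 1"] i by simp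
      show ?thesis using e1 e2 True unfolding psi1_def by simp
    next
      case False
      then have v1: "n < v" "v \<le> n + m1" using s by auto
      have j: "\<not> v - 1 < length f" "v - 1 < length f + length h" using assms v1 m1_le by simp_all
      have e1: "times_w f h ! (v - 1) = h ! (v - 1 - n) + n" using times_w_nth[of "v - 1" f h] j assms by simp
      have i: "\<not> v - n + n1 - 1 < length (take n1 f)" "v - n + n1 - 1 - length (take n1 f) = v - 1 - n"
        "v - 1 - n < length (take m1 h)" using v1 assms n1_le m1_le by simp_all
      have e2: "?u ! (v - n + n1 - 1) = h ! (v - 1 - n) + n"
        unfolding nth_append if_not_P[OF i(1)] i(2) using i(3) m1_le assms by simp
      show ?thesis using e1 e2 False unfolding psi1_def by simp
    qed
  qed
  also have "\<dots> = comp_w ?u g1" by (simp add: comp_w_def g1_def)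
  finally show ?thesis .
qed

lemma drop_word:
  assumes "length f = n" "length h = m"
  shows "drop r (comp_w (times_w f h) \<gamma>) = comp_w (drop n1 f @ map (\<lambda>i. i + n) (drop m1 h)) g2"
proof -
  let ?u = "drop n1 f @ map (\<lambda>i. i + n) (drop m1 h)"
  have "drop r (comp_w (times_w f h) \<gamma>) = map (\<lambda>v. times_w f h ! (v - 1)) (drop r \<gamma>)"
    by (simp add: comp_w_def drop_map)
  also have "\<dots> = map (\<lambda>v. ?u ! (psi2 v - 1)) (drop r \<gamma>)"
  proof (rule map_cong[OF refl])
    fix v assume v: "v \<in> set (drop r \<gamma>)"
    note s = setD[OF v]
    have vv: "1 \<le> v \<and> v \<le> n + m" using v gamma_range by (meson in_set_dropD)
    show "times_w f h ! (v - 1) = ?u ! (psi2 v - 1)"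
    proof (cases "v \<le> n")
      case True
      then have v1: "n1 < v" "v \<le> n" using s by auto
      have "v - 1 < length f" using v1 n1_le assms by linarith
      then have e1: "times_w f h ! (v - 1) = f ! (v - 1)" using times_w_nth[of "v - 1" f h] by simp
      have i: "v - n1 - 1 < length (drop n1 f)" "n1 + (v - n1 - 1) = v - 1" using v1 assms n1_le by simp_all
      have e2: "?u ! (v - n1 - 1) = f ! (v - 1)" using nth_append[of "drop n1 f" _ "v - n1 - 1"] i by simp
      show ?thesis using e1 e2 True unfolding psi2_def by simp
    next
      case False
      then have v1: "n + m1 < v" "v \<le> n + m" using s by auto
      have j: "\<not> v - 1 < length f" "v - 1 < length f + length h" using assms v1 m1_le by simp_all
      have e1: "times_w f h ! (v - 1) = h ! (v - 1 - n) + n" using times_w_nth[of "v - 1" f h] j assms by simp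
      have i: "\<not> v - n1 - m1 - 1 < length (drop n1 f)" "v - n1 - m1 - 1 - length (drop n1 f) = v - 1 - n - m1"
        "v - 1 - n - m1 < length (drop m1 h)" "m1 + (v - 1 - n - m1) = v - 1 - n" using v1 assms n1_le m1_le by simp_all
      have e2: "?u ! (v - n1 - m1 - 1) = h ! (v - 1 - n) + n"
        unfolding nth_append if_not_P[OF i(1)] i(2) using i(3) i(4) m1_le assms by simp
      show ?thesis using e1 e2 False unfolding psi2_def by simp
    qed
  qed
  also have "\<dots> = comp_w ?u g2" by (simp add: comp_w_def g2_def)
  finally show ?thesis .
qed

end


lemma PF_basis_iff: "f \<in> PF_basis \<longleftrightarrow> 1 \<le> length f \<and> pfc (length f) f"
  unfolding PF_basis_def is_pf_pfc pfc_def by auto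

lemma pfc_length: "pfc n f \<Longrightarrow> length f = n" by (simp add: pfc_def)

lemma pfc_times: "pfc n f \<Longrightarrow> pfc m g \<Longrightarrow> pfc (n + m) (times_w f g)"
proof -
  assume f: "pfc n f" and g: "pfc m g"
  have lf: "length f = n" "length g = m" using f g by (simp_all add: pfc_def)
  have c: "k \<le> cnt (times_w f g) (Suc k)" if k: "k \<le> n + m" for k
  proof -
    have e: "cnt (times_w f g) (Suc k) = cnt f (Suc k) + cnt g (Suc k - n)"
      unfolding times_w_def lf cnt_append cnt_shift ..
    show ?thesis
    proof (cases "k \<le> n")
      case True
      then show ?thesis using f e unfolding pfc_def by fastforce
    next
      case False
      then have "cnt f (Suc k) = n" using f lf by (intro trans[OF cnt_all]) (auto simp: pfc_def)
      moreover have "k - n \<le> cnt g (Suc (k - n))" using g k unfolding pfc_def by simp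
      moreover have "Suc k - n = Suc (k - n)" using False by simp
      ultimately show ?thesis using e False by simp
    qed
  qed
  show ?thesis unfolding pfc_def using c f g lf
    by (auto simp: times_w_def pfc_def)
qed

lemma pfc_comp: "pfc k u \<Longrightarrow> is_perm k \<sigma> \<Longrightarrow> pfc k (comp_w u \<sigma>)"
proof -
  assume u: "pfc k u" and s: "is_perm k \<sigma>"
  have l: "length u = k" using u by (simp add: pfc_def)
  have m: "mset (comp_w u \<sigma>) = mset u" using mset_comp_w s l by simp
  then have "set (comp_w u \<sigma>) = set u" by (metis set_mset_mset)
  moreover have "cnt (comp_w u \<sigma>) = cnt u" using m by (rule cnt_mset)
  moreover have "length (comp_w u \<sigma>) = k" using s is_perm_length by simp
  ultimately show ?thesis using u unfolding pfc_def by simp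
qed

lemma park_PF: "1 \<le> length h \<Longrightarrow> park h \<in> PF_basis"
  unfolding PF_basis_iff using pfc_park by simp

context shd
begin

lemma K1:
  assumes f: "pfc n f" and h: "pfc m h"
  shows "park (take r (comp_w (times_w f h) \<gamma>)) = comp_w (times_w (park (take n1 f)) (park (take m1 h))) g1"
proof -
  have lf: "length f = n" "length h = m" using f h by (simp_all add: pfc_def)
  let ?u = "take n1 f @ map (\<lambda>i. i + n) (take m1 h)"
  have lu: "length ?u = n1 + m1" using lf n1_le m1_le by simp
  have p: "is_perm (length ?u) g1" using Sh_perm[OF g1_Sh] lu by simp
  have sa: "(\<forall>x\<in>set (take n1 f). 1 \<le> x \<and> x \<le> n) \<and> length (take n1 f) \<le> n \<and>
      (\<forall>k\<le>n. k \<le> cnt (take n1 f) (Suc k) + (n - length (take n1 f)))"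
    using sub_pf(1)[of n "take n1 f" "drop n1 f"] f by (metis append_take_drop_id)
  have sb: "\<forall>x\<in>set (take m1 h). 1 \<le> x" using h unfolding pfc_def by (meson in_set_takeD)
  have "park (take r (comp_w (times_w f h) \<gamma>)) = park (comp_w ?u g1)" using take_word lf by simp
  also have "\<dots> = comp_w (park ?u) g1" using park_comp_w p by blast
  also have "park ?u = times_w (park (take n1 f)) (park (take m1 h))"
    using park_append sa sb by blast
  finally show ?thesis .
qed

lemma K2:
  assumes f: "pfc n f" and h: "pfc m h"
  shows "park (drop r (comp_w (times_w f h) \<gamma>)) = comp_w (times_w (park (drop n1 f)) (park (drop m1 h))) g2"
proof -
  have lf: "length f = n" "length h = m" using f h by (simp_all add: pfc_def)
  let ?u = "drop n1 f @ map (\<lambda>i. i + n) (drop m1 h)"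
  have lu: "length ?u = (n - n1) + (m - m1)" using lf n1_le m1_le by simp
  have p: "is_perm (length ?u) g2" using Sh_perm[OF g2_Sh] lu by simp
  have sa: "(\<forall>x\<in>set (drop n1 f). 1 \<le> x \<and> x \<le> n) \<and> length (drop n1 f) \<le> n \<and>
      (\<forall>k\<le>n. k \<le> cnt (drop n1 f) (Suc k) + (n - length (drop n1 f)))"
    using sub_pf(2)[of n "take n1 f" "drop n1 f"] f by (metis append_take_drop_id)
  have sb: "\<forall>x\<in>set (drop m1 h). 1 \<le> x" using h unfolding pfc_def by (meson in_set_dropD)
  have "park (drop r (comp_w (times_w f h) \<gamma>)) = park (comp_w ?u g2)" using drop_word lf by simp
  also have "\<dots> = comp_w (park ?u) g2" using park_comp_w p by blast
  also have "park ?u = times_w (park (drop n1 f)) (park (drop m1 h))"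
    using park_append sa sb by blast
  finally show ?thesis .
qed

end


lemma sum_supp_ext:
  fixes x :: "'b \<Rightarrow> 'k::comm_ring_1"
  assumes "finite A" "supp x \<subseteq> A"
  shows "(\<Sum>b\<in>supp x. x b * Kf b) = (\<Sum>b\<in>A. x b * Kf b)"
  by (rule sum.mono_neutral_left) (use assms in \<open>auto simp: supp_def\<close>)

lemma LIN:
  fixes X :: "'i \<Rightarrow> 'b \<Rightarrow> 'k::comm_ring_1"
  assumes I: "finite I" and fs: "\<forall>i\<in>I. finite (supp (X i))"
    and X0: "X0 = (\<lambda>b. \<Sum>i\<in>I. c i * X i b)"
  shows "(\<Sum>b\<in>supp X0. X0 b * Kf b) = (\<Sum>i\<in>I. c i * (\<Sum>b\<in>supp (X i). X i b * Kf b))"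
proof -
  define A where "A = (\<Union>i\<in>I. supp (X i))"
  have fA: "finite A" unfolding A_def using I fs by blast
  have sA: "supp X0 \<subseteq> A"
  proof
    fix b assume "b \<in> supp X0"
    then have "(\<Sum>i\<in>I. c i * X i b) \<noteq> 0" unfolding supp_def X0 by simp
    then obtain i where i: "i \<in> I" "c i * X i b \<noteq> 0" by (meson sum.neutral)
    then have "X i b \<noteq> 0" by auto
    then show "b \<in> A" unfolding A_def supp_def using i(1) by blast
  qed
  have "(\<Sum>b\<in>supp X0. X0 b * Kf b) = (\<Sum>b\<in>A. X0 b * Kf b)" by (rule sum_supp_ext[OF fA sA])
  also have "\<dots> = (\<Sum>b\<in>A. \<Sum>i\<in>I. c i * (X i b * Kf b))"
    unfolding X0 by (simp add: sum_distrib_right mult.assoc)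
  also have "\<dots> = (\<Sum>i\<in>I. \<Sum>b\<in>A. c i * (X i b * Kf b))" by (rule sum.swap)
  also have "\<dots> = (\<Sum>i\<in>I. c i * (\<Sum>b\<in>A. X i b * Kf b))" by (simp add: sum_distrib_left)
  also have "\<dots> = (\<Sum>i\<in>I. c i * (\<Sum>b\<in>supp (X i). X i b * Kf b))"
  proof (rule sum.cong[OF refl])
    fix i assume "i \<in> I"
    then have "supp (X i) \<subseteq> A" unfolding A_def by blast
    then show "c i * (\<Sum>b\<in>A. X i b * Kf b) = c i * (\<Sum>b\<in>supp (X i). X i b * Kf b)"
      using sum_supp_ext[OF fA] by metis
  qed
  finally show ?thesis .
qed

lemma LIN2:
  fixes x :: "'b \<Rightarrow> 'k::comm_ring_1"
  assumes "finite (supp x)" "finite (supp x')"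
  shows "(\<Sum>b\<in>supp (\<lambda>b. a * x b + x' b). (a * x b + x' b) * Kf b)
       = a * (\<Sum>b\<in>supp x. x b * Kf b) + (\<Sum>b\<in>supp x'. x' b * Kf b)"
proof -
  let ?A = "supp x \<union> supp x'"
  have fA: "finite ?A" using assms by simp
  have s: "supp (\<lambda>b. a * x b + x' b) \<subseteq> ?A" by (auto simp: supp_def)
  have "(\<Sum>b\<in>supp (\<lambda>b. a * x b + x' b). (a * x b + x' b) * Kf b) = (\<Sum>b\<in>?A. (a * x b + x' b) * Kf b)"
    using sum_supp_ext[OF fA s, of Kf] by simp
  also have "\<dots> = a * (\<Sum>b\<in>?A. x b * Kf b) + (\<Sum>b\<in>?A. x' b * Kf b)"
    by (simp add: algebra_simps sum.distrib sum_distrib_left)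
  also have "\<dots> = a * (\<Sum>b\<in>supp x. x b * Kf b) + (\<Sum>b\<in>supp x'. x' b * Kf b)"
    using sum_supp_ext[OF fA, of x Kf] sum_supp_ext[OF fA, of x' Kf] by auto
  finally show ?thesis .
qed

lemma supp_bvec[simp]: "supp (bvec a :: 'b \<Rightarrow> 'k::zero_neq_one) = {a}"
  by (auto simp: supp_def bvec_def)

lemma sum_bvec[simp]: "(\<Sum>b\<in>supp (bvec a :: 'b \<Rightarrow> 'k::comm_ring_1). (bvec a b :: 'k) * Kf b) = Kf a"
  by (subst supp_bvec) (simp add: bvec_def)

lemma bvec_same[simp]: "bvec a a = 1"
  by (simp add: bvec_def)

lemma tens_bvec: "tens (bvec a) (bvec b) = (bvec (a, b) :: _ \<Rightarrow> 'k::comm_ring_1)"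
  by (auto simp: tens_def bvec_def)

lemma expand:
  fixes x :: "'b \<Rightarrow> 'k::comm_ring_1"
  assumes "finite (supp x)"
  shows "x a = (\<Sum>f\<in>supp x. x f * bvec f a)"
proof (cases "a \<in> supp x")
  case True
  have "(\<Sum>f\<in>supp x. x f * bvec f a) = (\<Sum>f\<in>supp x. if f = a then x f else 0)"
    by (rule sum.cong) (auto simp: bvec_def)
  then show ?thesis using assms True by (simp add: sum.delta')
next
  case False
  then show ?thesis using assms by (auto simp: bvec_def supp_def intro!: sum.neutral)
qed

abbreviation W where "W \<gamma> f g \<equiv> comp_w (times_w f g) \<gamma>"

lemma pq_prod_alt: "pq_prod \<gamma> x y = (\<lambda>h. \<Sum>f\<in>supp x. x f * (\<Sum>g\<in>supp y. y g * bvec (W \<gamma> f g) h))"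
  unfolding pq_prod_def by (simp add: sum_distrib_left mult.assoc)

lemma pq_prod_pairs:
  assumes "finite (supp x)" "finite (supp y)"
  shows "pq_prod \<gamma> x y = (\<lambda>h. \<Sum>p\<in>supp x \<times> supp y. (x (fst p) * y (snd p)) * bvec (W \<gamma> (fst p) (snd p)) h)"
  unfolding pq_prod_def using assms by (simp add: sum.cartesian_product split_def)

lemma pq_prod_bvec: "pq_prod \<gamma> (bvec a) (bvec b) = (bvec (W \<gamma> a b) :: _ \<Rightarrow> 'k::field)"
  unfolding pq_prod_def supp_bvec by (simp add: bvec_def)

abbreviation D where "D f r \<equiv> (park (take r f), park (drop r f))"

lemma pq_cop_alt: "pq_cop x = (\<lambda>t. \<Sum>f\<in>supp x. x f * (\<Sum>r\<in>{1..<length f}. bvec (D f r) t))"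
  unfolding pq_cop_def tens_bvec by (simp add: sum_distrib_left)

lemma pq_cop_bvec: "pq_cop (bvec f) = (\<lambda>t. \<Sum>r\<in>{1..<length f}. (bvec (D f r) t :: 'k::field))"
  unfolding pq_cop_alt supp_bvec by (simp add: bvec_def)

lemma pq_cop_sigma:
  assumes "finite (supp x)"
  shows "pq_cop x = (\<lambda>t. \<Sum>p\<in>Sigma (supp x) (\<lambda>f. {1..<length f}). x (fst p) * bvec (D (fst p) (snd p)) t)"
  unfolding pq_cop_alt using assms by (simp add: sum.Sigma sum_distrib_left split_def)


lemma hom_iff: "x \<in> hom PF_basis length n \<longleftrightarrow> finite (supp x) \<and> supp x \<subseteq> PF_basis \<and> (\<forall>b\<in>supp x. length b = n)"
  by (simp add: hom_def fvec_def)

lemma hom_pfc: "x \<in> hom PF_basis length n \<Longrightarrow> f \<in> supp x \<Longrightarrow> pfc n f \<and> 1 \<le> n"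
proof -
  assume x: "x \<in> hom PF_basis length n" and f: "f \<in> supp x"
  then have "f \<in> PF_basis" "length f = n" unfolding hom_iff by auto
  then show ?thesis unfolding PF_basis_iff by simp
qed

lemma pq_prod_supp: "supp (pq_prod \<gamma> x y) \<subseteq> (\<lambda>(f, g). W \<gamma> f g) ` (supp x \<times> supp y)"
proof
  fix h assume h: "h \<in> supp (pq_prod \<gamma> x y)"
  show "h \<in> (\<lambda>(f, g). W \<gamma> f g) ` (supp x \<times> supp y)"
  proof (rule ccontr)
    assume n: "h \<notin> (\<lambda>(f, g). W \<gamma> f g) ` (supp x \<times> supp y)"
    have "pq_prod \<gamma> x y h = 0" unfolding pq_prod_def
      by (rule sum.neutral, rule ballI, rule sum.neutral) (use n in \<open>auto simp: bvec_def\<close>)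
    then show False using h by (simp add: supp_def)
  qed
qed

lemma pq_prod_hom:
  assumes g: "\<gamma> \<in> Sh n m" and x: "x \<in> hom PF_basis length n" and y: "y \<in> hom PF_basis length m"
  shows "(pq_prod \<gamma> x y :: _ \<Rightarrow> 'k::field) \<in> hom PF_basis length (n + m)"
proof -
  have fx: "finite (supp x)" "finite (supp y)" using x y by (simp_all add: hom_iff)
  have s: "supp (pq_prod \<gamma> x y) \<subseteq> (\<lambda>(f, g). W \<gamma> f g) ` (supp x \<times> supp y)" by (rule pq_prod_supp)
  have w: "W \<gamma> f h \<in> PF_basis \<and> length (W \<gamma> f h) = n + m" if "f \<in> supp x" "h \<in> supp y" for f h
  proof -
    have "pfc n f" "1 \<le> n" "pfc m h" using hom_pfc[OF x that(1)] hom_pfc[OF y that(2)] by auto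
    then have "pfc (n + m) (W \<gamma> f h)" using pfc_times pfc_comp Sh_perm[OF g] by blast
    then show ?thesis using \<open>1 \<le> n\<close> Sh_length[OF g] unfolding PF_basis_iff by (simp add: pfc_length)
  qed
  show ?thesis unfolding hom_iff
    using s fx w finite_subset[OF s] by fastforce
qed

lemma pq_prod_lin1:
  assumes "x \<in> hom PF_basis length n" "x' \<in> hom PF_basis length n"
  shows "pq_prod \<gamma> (\<lambda>b. a * x b + x' b) y = (\<lambda>b. a * pq_prod \<gamma> x y b + pq_prod \<gamma> x' y b :: 'k::field)"
proof -
  have f: "finite (supp x)" "finite (supp x')" using assms by (simp_all add: hom_iff)
  show ?thesis unfolding pq_prod_alt
    using LIN2[OF f, of a] by simp
qed

lemma pq_prod_lin2:
  assumes "y \<in> hom PF_basis length m" "y' \<in> hom PF_basis length m"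
  shows "pq_prod \<gamma> x (\<lambda>b. a * y b + y' b) = (\<lambda>b. a * pq_prod \<gamma> x y b + pq_prod \<gamma> x y' b :: 'k::field)"
proof -
  have f: "finite (supp y)" "finite (supp y')" using assms by (simp_all add: hom_iff)
  show ?thesis unfolding pq_prod_alt
  proof (rule ext)
    fix h
    have "(\<Sum>f\<in>supp x. x f * (\<Sum>g\<in>supp (\<lambda>b. a * y b + y' b). (a * y g + y' g) * bvec (W \<gamma> f g) h))
      = (\<Sum>f\<in>supp x. x f * (a * (\<Sum>g\<in>supp y. y g * bvec (W \<gamma> f g) h) + (\<Sum>g\<in>supp y'. y' g * bvec (W \<gamma> f g) h)))"
      using LIN2[OF f, of a] by simp
    also have "\<dots> = a * (\<Sum>f\<in>supp x. x f * (\<Sum>g\<in>supp y. y g * bvec (W \<gamma> f g) h)) + (\<Sum>f\<in>supp x. x f * (\<Sum>g\<in>supp y'. y' g * bvec (W \<gamma> f g) h))"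
      by (simp add: algebra_simps sum.distrib sum_distrib_left)
    finally show "(\<Sum>f\<in>supp x. x f * (\<Sum>g\<in>supp (\<lambda>b. a * y b + y' b). (a * y g + y' g) * bvec (W \<gamma> f g) h))
      = a * (\<Sum>f\<in>supp x. x f * (\<Sum>g\<in>supp y. y g * bvec (W \<gamma> f g) h)) + (\<Sum>f\<in>supp x. x f * (\<Sum>g\<in>supp y'. y' g * bvec (W \<gamma> f g) h))" .
  qed
qed

lemma comp_w_assoc: "\<forall>i\<in>set c. 1 \<le> i \<and> i \<le> length b \<Longrightarrow> comp_w (comp_w a b) c = comp_w a (comp_w b c)"
  by (auto simp: comp_w_def)

lemma times_w_assoc: "times_w (times_w f g) k = times_w f (times_w g k)"
  by (simp add: times_w_def)

lemma times_comp_right: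
  assumes "\<forall>i\<in>set \<delta>. 1 \<le> i \<and> i \<le> length v"
  shows "times_w f (comp_w v \<delta>) = comp_w (times_w f v) (times_w (idp (length f)) \<delta>)"
proof -
  have a: "map (\<lambda>i. times_w f v ! (i - 1)) (idp (length f)) = f"
    by (rule nth_equalityI) (auto simp: idp_def times_w_def nth_append)
  have b: "map (\<lambda>i. times_w f v ! (i - 1)) (map (\<lambda>i. i + length f) \<delta>) = map (\<lambda>i. i + length f) (map (\<lambda>j. v ! (j - 1)) \<delta>)"
    using assms by (auto simp: times_w_def nth_append)
  show ?thesis unfolding comp_w_def using a b by (simp add: times_w_def)
qed

lemma times_comp_left:
  assumes "\<forall>i\<in>set \<sigma>. 1 \<le> i \<and> i \<le> length u" "length \<sigma> = length u"
  shows "times_w (comp_w u \<sigma>) k = comp_w (times_w u k) (times_w \<sigma> (idp (length k)))"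
proof -
  have a: "map (\<lambda>i. times_w u k ! (i - 1)) \<sigma> = comp_w u \<sigma>"
    using assms by (auto simp: times_w_def nth_append comp_w_def)
  have b: "map (\<lambda>i. times_w u k ! (i - 1)) (map (\<lambda>i. i + length \<sigma>) (idp (length k))) = map (\<lambda>i. i + length u) k"
    using assms by (intro nth_equalityI) (auto simp: times_w_def nth_append idp_def)
  show ?thesis unfolding comp_w_def[of "times_w u k"] using a b assms by (simp add: times_w_def)
qed

lemma perm_range: "is_perm k \<sigma> \<Longrightarrow> \<forall>i\<in>set \<sigma>. 1 \<le> i \<and> i \<le> k"
  by (auto simp: is_perm_def)

lemma WID:
  assumes l: "length f = n" "length g = m" "length k = r"
    and \<gamma>: "\<gamma> \<in> Sh n (m + r)" and \<delta>: "\<delta> \<in> Sh m r" and \<sigma>: "\<sigma> \<in> Sh n m" and \<lambda>: "lam \<in> Sh (n + m) r"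
    and e: "comp_w (times_w (idp n) \<delta>) \<gamma> = comp_w (times_w \<sigma> (idp r)) lam"
  shows "W \<gamma> f (W \<delta> g k) = W lam (W \<sigma> f g) k"
proof -
  have p: "is_perm (n + (m + r)) \<gamma>" "is_perm (m + r) \<delta>" "is_perm (n + m) \<sigma>" "is_perm (n + m + r) lam"
    using \<gamma> \<delta> \<sigma> \<lambda> Sh_perm by blast+
  have L: "W \<gamma> f (W \<delta> g k) = comp_w (times_w (times_w f g) k) (comp_w (times_w (idp n) \<delta>) \<gamma>)"
  proof -
    have "times_w f (W \<delta> g k) = comp_w (times_w f (times_w g k)) (times_w (idp n) \<delta>)"
      using times_comp_right[of \<delta> "times_w g k" f] perm_range[OF p(2)] l by simp
    then have "W \<gamma> f (W \<delta> g k) = comp_w (comp_w (times_w f (times_w g k)) (times_w (idp n) \<delta>)) \<gamma>" by simp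
    also have "\<dots> = comp_w (times_w f (times_w g k)) (comp_w (times_w (idp n) \<delta>) \<gamma>)"
      using perm_range[OF p(1)] is_perm_length[OF p(2)] by (intro comp_w_assoc) (simp add: add.assoc)
    finally show ?thesis by (simp add: times_w_assoc)
  qed
  have R: "W lam (W \<sigma> f g) k = comp_w (times_w (times_w f g) k) (comp_w (times_w \<sigma> (idp r)) lam)"
  proof -
    have "times_w (W \<sigma> f g) k = comp_w (times_w (times_w f g) k) (times_w \<sigma> (idp r))"
      using times_comp_left[of \<sigma> "times_w f g" k] perm_range[OF p(3)] is_perm_length[OF p(3)] l by simp
    then have "W lam (W \<sigma> f g) k = comp_w (comp_w (times_w (times_w f g) k) (times_w \<sigma> (idp r))) lam" by simp
    also have "\<dots> = comp_w (times_w (times_w f g) k) (comp_w (times_w \<sigma> (idp r)) lam)"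
      using perm_range[OF p(4)] is_perm_length[OF p(3)] by (intro comp_w_assoc) simp
    finally show ?thesis .
  qed
  show ?thesis using L R e by simp
qed

lemma pq_assoc:
  fixes x y z :: "nat list \<Rightarrow> 'k::field"
  assumes x: "x \<in> hom PF_basis length n" and y: "y \<in> hom PF_basis length m" and z: "z \<in> hom PF_basis length r"
    and \<gamma>: "\<gamma> \<in> Sh n (m + r)" and \<delta>: "\<delta> \<in> Sh m r" and \<sigma>: "\<sigma> \<in> Sh n m" and \<lambda>: "lam \<in> Sh (n + m) r"
    and e: "comp_w (times_w (idp n) \<delta>) \<gamma> = comp_w (times_w \<sigma> (idp r)) lam"
  shows "pq_prod \<gamma> x (pq_prod \<delta> y z) = pq_prod lam (pq_prod \<sigma> x y) z"
proof (rule ext)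
  fix h
  have fx: "finite (supp x)" "finite (supp y)" "finite (supp z)" using x y z by (simp_all add: hom_iff)
  have "pq_prod \<gamma> x (pq_prod \<delta> y z) h
      = (\<Sum>f\<in>supp x. x f * (\<Sum>p\<in>supp y \<times> supp z. (y (fst p) * z (snd p)) * bvec (W \<gamma> f (W \<delta> (fst p) (snd p))) h))"
    unfolding pq_prod_alt[of \<gamma> x] 
    by (subst LIN[OF _ _ pq_prod_pairs[OF fx(2,3)]]) (use fx in auto)
  also have "\<dots> = (\<Sum>f\<in>supp x. \<Sum>g\<in>supp y. \<Sum>k\<in>supp z. x f * y g * z k * bvec (W \<gamma> f (W \<delta> g k)) h)"
    by (simp add: sum.cartesian_product split_def sum_distrib_left mult.assoc)
  also have "\<dots> = (\<Sum>f\<in>supp x. \<Sum>g\<in>supp y. \<Sum>k\<in>supp z. x f * y g * z k * bvec (W lam (W \<sigma> f g) k) h)"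
  proof (intro sum.cong refl)
    fix f g k assume "f \<in> supp x" "g \<in> supp y" "k \<in> supp z"
    then have "length f = n" "length g = m" "length k = r" using x y z by (auto simp: hom_iff)
    then show "x f * y g * z k * bvec (W \<gamma> f (W \<delta> g k)) h = x f * y g * z k * bvec (W lam (W \<sigma> f g) k) h"
      using WID[OF _ _ _ \<gamma> \<delta> \<sigma> \<lambda> e] by simp
  qed
  also have "\<dots> = (\<Sum>p\<in>supp x \<times> supp y. \<Sum>k\<in>supp z. x (fst p) * y (snd p) * z k * bvec (W lam (W \<sigma> (fst p) (snd p)) k) h)"
    by (simp only: sum.cartesian_product') simp
  also have "\<dots> = (\<Sum>p\<in>supp x \<times> supp y. (x (fst p) * y (snd p)) * (\<Sum>k\<in>supp z. z k * bvec (W lam (W \<sigma> (fst p) (snd p)) k) h))"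
    by (simp add: sum_distrib_left mult.assoc)
  also have "\<dots> = pq_prod lam (pq_prod \<sigma> x y) z h"
    unfolding pq_prod_alt[of lam "pq_prod \<sigma> x y"]
    by (subst LIN[OF _ _ pq_prod_pairs[OF fx(1,2)]]) (use fx in auto)
  finally show "pq_prod \<gamma> x (pq_prod \<delta> y z) h = pq_prod lam (pq_prod \<sigma> x y) z h" .
qed

lemma SA: "shuffle_algebra PF_basis length (pq_prod :: nat list \<Rightarrow> (nat list \<Rightarrow> 'k::field) \<Rightarrow> _ \<Rightarrow> _)"
  unfolding shuffle_algebra_def
  apply (intro conjI allI impI ballI)
     apply (erule (2) pq_prod_hom)
    apply (erule (1) pq_prod_lin1)
   apply (erule (1) pq_prod_lin2)
  apply (elim conjE)
  apply (rule pq_assoc; assumption)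
  done


lemma hom0: "hom PF_basis length 0 = {(\<lambda>_. 0) :: nat list \<Rightarrow> 'k::field}"
proof -
  have "x \<in> hom PF_basis length 0 \<longleftrightarrow> x = (\<lambda>_. 0)" for x :: "nat list \<Rightarrow> 'k"
  proof
    assume "x \<in> hom PF_basis length 0"
    then have h: "supp x \<subseteq> PF_basis" "\<forall>b\<in>supp x. length b = 0" unfolding hom_iff by auto
    have "supp x = {}"
    proof (rule ccontr)
      assume "supp x \<noteq> {}"
      then obtain b where "b \<in> supp x" by blast
      then have "b \<in> PF_basis" "length b = 0" using h by auto
      then show False unfolding PF_basis_iff by simp
    qed
    then show "x = (\<lambda>_. 0)" by (auto simp: supp_def)
  next
    assume "x = (\<lambda>_. 0)"
    then show "x \<in> hom PF_basis length 0" by (simp add: hom_iff supp_def)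
  qed
  then show ?thesis by blast
qed

lemma cop_lin:
  fixes x x' :: "nat list \<Rightarrow> 'k::field"
  assumes "x \<in> fvec PF_basis" "x' \<in> fvec PF_basis"
  shows "pq_cop (\<lambda>b. a * x b + x' b) = (\<lambda>t. a * pq_cop x t + pq_cop x' t)"
proof -
  have f: "finite (supp x)" "finite (supp x')" using assms by (simp_all add: fvec_def)
  show ?thesis unfolding pq_cop_alt using LIN2[OF f, of a] by simp
qed

lemma cop_supp:
  fixes x :: "nat list \<Rightarrow> 'k::field"
  assumes "finite (supp x)"
  shows "supp (pq_cop x) \<subseteq> (\<lambda>p. D (fst p) (snd p)) ` Sigma (supp x) (\<lambda>f. {1..<length f})"
proof
  fix t assume t: "t \<in> supp (pq_cop x)"
  show "t \<in> (\<lambda>p. D (fst p) (snd p)) ` Sigma (supp x) (\<lambda>f. {1..<length f})"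
  proof (rule ccontr)
    assume n: "t \<notin> (\<lambda>p. D (fst p) (snd p)) ` Sigma (supp x) (\<lambda>f. {1..<length f})"
    have "pq_cop x t = 0" unfolding pq_cop_sigma[OF assms]
      by (rule sum.neutral) (use n in \<open>force simp: bvec_def\<close>)
    then show False using t by (simp add: supp_def)
  qed
qed

lemma cop_deg:
  fixes x :: "nat list \<Rightarrow> 'k::field"
  assumes x: "x \<in> hom PF_basis length n"
  shows "pq_cop x \<in> fvec (PF_basis \<times> PF_basis) \<and>
       (\<forall>(p, q)\<in>supp (pq_cop x). 1 \<le> length p \<and> length p \<le> n - 1 \<and> length q = n - length p)"
proof -
  have fx: "finite (supp x)" using x by (simp add: hom_iff)
  note s = cop_supp[OF fx]
  have fin: "finite (supp (pq_cop x))"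
    by (rule finite_subset[OF s]) (use fx in auto)
  have el: "park (take r f) \<in> PF_basis \<and> park (drop r f) \<in> PF_basis \<and> 1 \<le> length (park (take r f)) \<and>
      length (park (take r f)) \<le> n - 1 \<and> length (park (drop r f)) = n - length (park (take r f))"
    if "f \<in> supp x" "r \<in> {1..<length f}" for f r
  proof -
    have "length f = n" using x that(1) by (auto simp: hom_iff)
    then show ?thesis using that(2) park_PF[of "take r f"] park_PF[of "drop r f"] by auto
  qed
  show ?thesis unfolding fvec_def using fin s el by fastforce
qed

lemma bvec_pair: "(bvec (p, q) (a, b) :: 'k::comm_ring_1) = bvec p a * bvec q b"
  by (simp add: bvec_def)

lemma park_take_park: "s \<le> r \<Longrightarrow> park (take s (park h)) = park (take s h)"
proof -
  have "park (take s (park h)) = park (map (pv h) (take s h))" by (simp add: park_eq take_map)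
  also have "\<dots> = park (take s h)"
    by (rule park_R) (metis append_take_drop_id mset_append mset_subset_eq_add_left)
  finally show ?thesis .
qed

lemma park_drop_park: "park (drop s (park h)) = park (drop s h)"
proof -
  have "park (drop s (park h)) = park (map (pv h) (drop s h))" by (simp add: park_eq drop_map)
  also have "\<dots> = park (drop s h)"
    by (rule park_R) (metis append_take_drop_id mset_append mset_subset_eq_add_right)
  finally show ?thesis .
qed

lemma park_take_park': "park (take s (park h)) = park (take s h)"
  using park_take_park by blast

lemma COA:
  fixes a b c :: "nat list"
  assumes "length f = n"
  shows "(\<Sum>r\<in>{1..<n}. (\<Sum>s\<in>{1..<length (park (take r f))}. (bvec (D (park (take r f)) s) (a, b) :: 'k::comm_ring_1)) * bvec (park (drop r f)) c)
       = (\<Sum>s\<in>{1..<n}. bvec (park (take s f)) a * (\<Sum>t\<in>{1..<length (park (drop s f))}. bvec (D (park (drop s f)) t) (b, c)))"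
proof -
  define T where "T s r = (bvec (park (take s f)) a * bvec (park (drop s (take r f))) b * bvec (park (drop r f)) c :: 'k)" for s r
  have L: "(\<Sum>r\<in>{1..<n}. (\<Sum>s\<in>{1..<length (park (take r f))}. (bvec (D (park (take r f)) s) (a, b) :: 'k)) * bvec (park (drop r f)) c)
      = (\<Sum>r\<in>{1..<n}. \<Sum>s\<in>{1..<r}. T s r)"
  proof (rule sum.cong[OF refl])
    fix r assume r: "r \<in> {1..<n}"
    then have lr: "length (park (take r f)) = r" using assms by simp
    show "(\<Sum>s\<in>{1..<length (park (take r f))}. (bvec (D (park (take r f)) s) (a, b) :: 'k)) * bvec (park (drop r f)) c
        = (\<Sum>s\<in>{1..<r}. T s r)"
      unfolding lr sum_distrib_right
    proof (rule sum.cong[OF refl])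
      fix s assume s: "s \<in> {1..<r}"
      have "park (take s (park (take r f))) = park (take s f)" using s park_take_park' by simp
      moreover have "park (drop s (park (take r f))) = park (drop s (take r f))" by (rule park_drop_park)
      ultimately show "bvec (D (park (take r f)) s) (a, b) * bvec (park (drop r f)) c = T s r"
        unfolding T_def bvec_pair using s by simp
    qed
  qed
  have R: "(\<Sum>s\<in>{1..<n}. bvec (park (take s f)) a * (\<Sum>t\<in>{1..<length (park (drop s f))}. (bvec (D (park (drop s f)) t) (b, c) :: 'k)))
      = (\<Sum>s\<in>{1..<n}. \<Sum>r\<in>{Suc s..<n}. T s r)"
  proof (rule sum.cong[OF refl])
    fix s assume s: "s \<in> {1..<n}"
    have ls: "length (park (drop s f)) = n - s" using assms by simp
    have "(\<Sum>t\<in>{1..<n - s}. bvec (park (take s f)) a * (bvec (D (park (drop s f)) t) (b, c) :: 'k))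
        = (\<Sum>t\<in>{1..<n - s}. T s (t + s))"
    proof (rule sum.cong[OF refl])
      fix t assume t: "t \<in> {1..<n - s}"
      have "park (take t (park (drop s f))) = park (take t (drop s f))" by (rule park_take_park')
      also have "take t (drop s f) = drop s (take (t + s) f)" by (simp add: take_drop add.commute)
      finally have e1: "park (take t (park (drop s f))) = park (drop s (take (t + s) f))" .
      have e2: "park (drop t (park (drop s f))) = park (drop (t + s) f)" using park_drop_park by (simp add: add.commute)
      show "bvec (park (take s f)) a * bvec (D (park (drop s f)) t) (b, c) = T s (t + s)"
        unfolding T_def bvec_pair e1 e2 by (simp add: mult.assoc)
    qed
    also have "\<dots> = (\<Sum>r\<in>{Suc s..<n}. T s r)"
      using sum.shift_bounds_nat_ivl[of "T s" 1 s "n - s"] s by simp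
    finally show "bvec (park (take s f)) a * (\<Sum>t\<in>{1..<length (park (drop s f))}. (bvec (D (park (drop s f)) t) (b, c) :: 'k))
        = (\<Sum>r\<in>{Suc s..<n}. T s r)" unfolding ls sum_distrib_left .
  qed
  have S: "(\<Sum>r\<in>{1..<n}. \<Sum>s\<in>{1..<r}. T s r) = (\<Sum>s\<in>{1..<n}. \<Sum>r\<in>{Suc s..<n}. T s r)"
  proof -
    have "(\<Sum>r\<in>{1..<n}. \<Sum>s\<in>{1..<r}. T s r) = (\<Sum>r\<in>{1..<n}. \<Sum>s\<in>{s. s \<in> {1..<n} \<and> s < r}. T s r)"
      by (rule sum.cong[OF refl], rule sum.cong) auto
    also have "\<dots> = (\<Sum>s\<in>{1..<n}. \<Sum>r\<in>{r. r \<in> {1..<n} \<and> s < r}. T s r)"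
      by (rule sum.swap_restrict) auto
    also have "\<dots> = (\<Sum>s\<in>{1..<n}. \<Sum>r\<in>{Suc s..<n}. T s r)"
      by (rule sum.cong[OF refl], rule sum.cong) auto
    finally show ?thesis .
  qed
  show ?thesis using L R S by simp
qed


lemma coassoc:
  fixes x :: "nat list \<Rightarrow> 'k::field"
  assumes x: "x \<in> fvec PF_basis"
  shows "lmap pq_cop (pq_cop x) = rmap pq_cop (pq_cop x)"
proof -
  have fx: "finite (supp x)" using x by (simp add: fvec_def)
  let ?S = "Sigma (supp x) (\<lambda>f. {1..<length f})"
  have fS: "finite ?S" using fx by auto
  have fsb: "\<forall>i\<in>?S. finite (supp (bvec (D (fst i) (snd i)) :: _ \<Rightarrow> 'k))" by simp
  have e: "pq_cop x = (\<lambda>t. \<Sum>i\<in>?S. x (fst i) * bvec (D (fst i) (snd i)) t)" by (rule pq_cop_sigma[OF fx])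
  show ?thesis
  proof (rule ext, clarify)
    fix a b c :: "nat list"
    let ?KL = "\<lambda>pq :: nat list \<times> nat list. pq_cop (bvec (fst pq)) (a, b) * (bvec (snd pq) c :: 'k)"
    let ?KR = "\<lambda>pq :: nat list \<times> nat list. (bvec (fst pq) a :: 'k) * pq_cop (bvec (snd pq)) (b, c)"
    have "lmap pq_cop (pq_cop x) (a, b, c) = (\<Sum>pq\<in>supp (pq_cop x). pq_cop x pq * ?KL pq)"
      unfolding lmap_def by (simp add: split_def mult.assoc)
    also have "\<dots> = (\<Sum>i\<in>?S. x (fst i) * ?KL (D (fst i) (snd i)))"
      using LIN[OF fS fsb e, of ?KL] by simp
    also have "\<dots> = (\<Sum>f\<in>supp x. \<Sum>r\<in>{1..<length f}. x f * ?KL (D f r))"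
      using sum.Sigma[of "supp x" "\<lambda>f. {1..<length f}" "\<lambda>f r. x f * ?KL (D f r)"] fx
      by (simp add: split_def)
    also have "\<dots> = (\<Sum>f\<in>supp x. x f * (\<Sum>r\<in>{1..<length f}.
        (\<Sum>s\<in>{1..<length (park (take r f))}. (bvec (D (park (take r f)) s) (a, b) :: 'k)) * bvec (park (drop r f)) c))"
      unfolding pq_cop_bvec fst_conv snd_conv sum_distrib_left ..
    also have "\<dots> = (\<Sum>f\<in>supp x. x f * (\<Sum>s\<in>{1..<length f}. bvec (park (take s f)) a *
        (\<Sum>t\<in>{1..<length (park (drop s f))}. (bvec (D (park (drop s f)) t) (b, c) :: 'k))))"
    proof (rule sum.cong[OF refl])
      fix f assume "f \<in> supp x"
      show "x f * (\<Sum>r\<in>{1..<length f}.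
        (\<Sum>s\<in>{1..<length (park (take r f))}. (bvec (D (park (take r f)) s) (a, b) :: 'k)) * bvec (park (drop r f)) c)
        = x f * (\<Sum>s\<in>{1..<length f}. bvec (park (take s f)) a *
        (\<Sum>t\<in>{1..<length (park (drop s f))}. (bvec (D (park (drop s f)) t) (b, c) :: 'k)))"
        by (rule arg_cong[where f="\<lambda>v. x f * v"], rule COA) simp
    qed
    also have "\<dots> = (\<Sum>f\<in>supp x. \<Sum>r\<in>{1..<length f}. x f * ?KR (D f r))"
      unfolding pq_cop_bvec fst_conv snd_conv sum_distrib_left ..
    also have "\<dots> = (\<Sum>i\<in>?S. x (fst i) * ?KR (D (fst i) (snd i)))"
      using sum.Sigma[of "supp x" "\<lambda>f. {1..<length f}" "\<lambda>f r. x f * ?KR (D f r)"] fx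
      by (simp add: split_def)
    also have "\<dots> = (\<Sum>pq\<in>supp (pq_cop x). pq_cop x pq * ?KR pq)"
      using LIN[OF fS fsb e, of ?KR] by simp
    also have "\<dots> = rmap pq_cop (pq_cop x) (a, b, c)"
      unfolding rmap_def by (simp add: split_def mult.assoc)
    finally show "lmap pq_cop (pq_cop x) (a, b, c) = rmap pq_cop (pq_cop x) (a, b, c)" .
  qed
qed


definition mk :: "nat list \<Rightarrow> nat list option" where
  "mk l = (if l = [] then None else Some l)"

definition split :: "nat list \<Rightarrow> nat \<Rightarrow> nat list option \<times> nat list option" where
  "split f k = (mk (park (take k f)), mk (park (drop k f)))"

lemma park_Nil_iff: "park l = [] \<longleftrightarrow> l = []"
  by (metis length_0_conv length_park)

lemma odeg_split: "k \<le> length f \<Longrightarrow> odeg length (fst (split f k)) = k"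
  by (cases k) (auto simp: split_def mk_def park_Nil_iff)

lemma dplus_bvec:
  assumes f: "pfc n f" "1 \<le> n"
  shows "dplus pq_cop (bvec f :: _ \<Rightarrow> 'k::field) = (\<lambda>p. \<Sum>k\<in>{0..n}. bvec (split f k) p)"
proof (rule ext)
  fix p :: "nat list option \<times> nat list option"
  have lf: "length f = n" using f by (simp add: pfc_def)
  have pf: "park f = f" using park_pf f by blast
  have fne: "f \<noteq> []" using lf f by auto
  have s0: "split f 0 = (None, Some f)" using pf fne by (simp add: split_def mk_def)
  have sn: "split f n = (Some f, None)" using pf fne lf by (simp add: split_def mk_def)
  have sk1: "fst (split f k) \<noteq> None" if "0 < k" for k using that fne by (simp add: split_def mk_def park_Nil_iff)
  have sk2: "snd (split f k) \<noteq> None" if "k < n" for k using that lf by (simp add: split_def mk_def park_Nil_iff)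
  obtain u v where p: "p = (u, v)" by (cases p)
  show "dplus pq_cop (bvec f :: _ \<Rightarrow> 'k) p = (\<Sum>k\<in>{0..n}. bvec (split f k) p)"
  proof (cases u)
    case None
    show ?thesis
    proof (cases v)
      case None
      have "bvec (split f k) p = (0::'k)" if "k \<in> {0..n}" for k
      proof (cases "k = 0")
        case True then show ?thesis using s0 p \<open>u = None\<close> None by (simp add: bvec_def)
      next
        case False
        then have "fst (split f k) \<noteq> None" using sk1[of k] by simp
        then have "p \<noteq> split f k" using p \<open>u = None\<close> by (metis fst_conv)
        then show ?thesis by (simp add: bvec_def)
      qed
      then show ?thesis using \<open>u = None\<close> None p by (simp add: dplus_def)
    next
      case (Some a)
      have "bvec (split f k) p = (if k = 0 then bvec f a else (0::'k))" if "k \<in> {0..n}" for k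
      proof (cases "k = 0")
        case True then show ?thesis using s0 p \<open>u = None\<close> Some by (simp add: bvec_def)
      next
        case False
        then have "fst (split f k) \<noteq> None" using sk1[of k] by simp
        then have "p \<noteq> split f k" using p \<open>u = None\<close> by (metis fst_conv)
        then show ?thesis using False by (simp add: bvec_def)
      qed
      then have "(\<Sum>k\<in>{0..n}. bvec (split f k) p) = (\<Sum>k\<in>{0..n}. if k = 0 then bvec f a else (0::'k))"
        by (rule sum.cong[OF refl])
      also have "\<dots> = bvec f a" by (simp add: sum.delta)
      finally show ?thesis using \<open>u = None\<close> Some p by (simp add: dplus_def)
    qed
  next
    case (Some a)
    show ?thesis
    proof (cases v)
      case None
      have "bvec (split f k) p = (if k = n then bvec f a else (0::'k))" if "k \<in> {0..n}" for k
      proof (cases "k = n")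
        case True then show ?thesis using sn p \<open>u = Some a\<close> None by (simp add: bvec_def)
      next
        case False then have "k < n" using that by simp
        then have "snd (split f k) \<noteq> None" using sk2[of k] by simp
        then have "p \<noteq> split f k" using p None by (metis snd_conv)
        then show ?thesis using False by (simp add: bvec_def)
      qed
      then have "(\<Sum>k\<in>{0..n}. bvec (split f k) p) = (\<Sum>k\<in>{0..n}. if k = n then bvec f a else (0::'k))"
        by (rule sum.cong[OF refl])
      also have "\<dots> = bvec f a" by (simp add: sum.delta)
      finally show ?thesis using \<open>u = Some a\<close> None p by (simp add: dplus_def)
    next
      case (Some b)
      have e: "bvec (split f k) p = (if k \<in> {1..<n} then bvec (D f k) (a, b) else (0::'k))" if "k \<in> {0..n}" for k
      proof (cases "k \<in> {1..<n}")
        case True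
        then have "split f k = (Some (park (take k f)), Some (park (drop k f)))"
          using lf fne by (simp add: split_def mk_def park_Nil_iff)
        then show ?thesis using True p \<open>u = Some a\<close> Some by (simp add: bvec_def)
      next
        case False
        then have "k = 0 \<or> k = n" using that by auto
        then have "p \<noteq> split f k" using s0 sn p \<open>u = Some a\<close> Some by auto
        then show ?thesis using False by (simp add: bvec_def)
      qed
      have "(\<Sum>k\<in>{0..n}. bvec (split f k) p) = (\<Sum>k\<in>{0..n}. if k \<in> {1..<n} then bvec (D f k) (a, b) else (0::'k))"
        using e by (rule sum.cong[OF refl])
      also have "\<dots> = (\<Sum>k\<in>{1..<n}. bvec (D f k) (a, b))"
        by (subst sum.inter_restrict[symmetric]) (auto intro: sum.cong)
      finally show ?thesis using \<open>u = Some a\<close> Some p lf by (simp add: dplus_def pq_cop_bvec)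
    qed
  qed
qed

lemma finite_supp_sum_bvec:
  assumes "finite I"
  shows "finite (supp (\<lambda>p. \<Sum>k\<in>I. (bvec (s k) p :: 'k::comm_ring_1)))"
proof (rule finite_subset[of _ "s ` I"])
  show "supp (\<lambda>p. \<Sum>k\<in>I. (bvec (s k) p :: 'k)) \<subseteq> s ` I"
  proof
    fix p assume "p \<in> supp (\<lambda>p. \<Sum>k\<in>I. (bvec (s k) p :: 'k))"
    then have "(\<Sum>k\<in>I. (bvec (s k) p :: 'k)) \<noteq> 0" by (simp add: supp_def)
    then obtain k where "k \<in> I" "(bvec (s k) p :: 'k) \<noteq> 0" by (meson sum.neutral)
    then show "p \<in> s ` I" by (auto simp: bvec_def split: if_splits)
  qed
qed (use assms in simp)

lemma dplus_lin:
  fixes x :: "nat list \<Rightarrow> 'k::field"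
  assumes "finite (supp x)"
  shows "dplus pq_cop x = (\<lambda>p. \<Sum>f\<in>supp x. x f * dplus pq_cop (bvec f) p)"
proof (rule ext)
  fix p :: "nat list option \<times> nat list option"
  obtain u v where p: "p = (u, v)" by (cases p)
  show "dplus pq_cop x p = (\<Sum>f\<in>supp x. x f * dplus pq_cop (bvec f) p)"
  proof (cases u; cases v)
    fix a b assume "u = Some a" "v = Some b"
    then show ?thesis using p by (simp add: dplus_def pq_cop_alt pq_cop_bvec)
  next
    fix a assume "u = Some a" "v = None"
    then show ?thesis using p expand[OF assms, of a] by (simp add: dplus_def)
  next
    fix a assume "u = None" "v = Some a"
    then show ?thesis using p expand[OF assms, of a] by (simp add: dplus_def)
  next
    assume "u = None" "v = None"
    then show ?thesis using p by (simp add: dplus_def)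
  qed
qed

lemma CONTR:
  fixes x :: "nat list \<Rightarrow> 'k::field"
  assumes x: "x \<in> hom PF_basis length n" and k: "k \<le> n"
  shows "(\<Sum>p\<in>supp (dplus pq_cop x). dplus pq_cop x p * (if odeg length (fst p) = k then G p else 0))
       = (\<Sum>f\<in>supp x. x f * G (split f k))"
proof -
  have fx: "finite (supp x)" using x by (simp add: hom_iff)
  have bf0: "dplus pq_cop (bvec f :: _ \<Rightarrow> 'k) = (\<lambda>p. \<Sum>j\<in>{0..n}. bvec (split f j) p)" if "f \<in> supp x" for f
    using dplus_bvec[of n f] hom_pfc[OF x that] by simp
  have bf: "dplus pq_cop (bvec f :: _ \<Rightarrow> 'k) = (\<lambda>p. \<Sum>j\<in>{0..n}. 1 * bvec (split f j) p)" if "f \<in> supp x" for f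
    using bf0[OF that] by simp
  have fs: "\<forall>f\<in>supp x. finite (supp (dplus pq_cop (bvec f :: _ \<Rightarrow> 'k)))"
  proof
    fix f assume "f \<in> supp x"
    then show "finite (supp (dplus pq_cop (bvec f :: _ \<Rightarrow> 'k)))"
      using bf0 finite_supp_sum_bvec[of "{0..n}" "split f"] by simp
  qed
  have "(\<Sum>p\<in>supp (dplus pq_cop x). dplus pq_cop x p * (if odeg length (fst p) = k then G p else 0))
      = (\<Sum>f\<in>supp x. x f * (\<Sum>p\<in>supp (dplus pq_cop (bvec f :: _ \<Rightarrow> 'k)). dplus pq_cop (bvec f) p * (if odeg length (fst p) = k then G p else 0)))"
    by (rule LIN[OF fx fs dplus_lin[OF fx]])
  also have "\<dots> = (\<Sum>f\<in>supp x. x f * G (split f k))"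
  proof (rule sum.cong[OF refl])
    fix f assume f: "f \<in> supp x"
    have lf: "length f = n" using hom_pfc[OF x f] by (simp add: pfc_def)
    have "(\<Sum>p\<in>supp (dplus pq_cop (bvec f :: _ \<Rightarrow> 'k)). dplus pq_cop (bvec f) p * (if odeg length (fst p) = k then G p else 0))
        = (\<Sum>j\<in>{0..n}. 1 * (\<Sum>p\<in>supp (bvec (split f j) :: _ \<Rightarrow> 'k). bvec (split f j) p * (if odeg length (fst p) = k then G p else 0)))"
      by (rule LIN[OF _ _ bf[OF f]]) simp_all
    also have "\<dots> = (\<Sum>j\<in>{0..n}. if j = k then G (split f k) else 0)"
      by (rule sum.cong[OF refl]) (use lf odeg_split in auto)
    also have "\<dots> = G (split f k)" using k by (simp add: sum.delta)
    finally show "x f * (\<Sum>p\<in>supp (dplus pq_cop (bvec f :: _ \<Rightarrow> 'k)). dplus pq_cop (bvec f) p * (if odeg length (fst p) = k then G p else 0))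
        = x f * G (split f k)" by simp
  qed
  finally show ?thesis .
qed

lemma Sh_0_left: "\<tau> \<in> Sh 0 m \<Longrightarrow> \<tau> = [1..<m+1]"
proof -
  assume t: "\<tau> \<in> Sh 0 m"
  have "\<forall>v\<in>set \<tau>. \<not> v \<le> 0" using Sh_perm[OF t] by (auto simp: is_perm_def)
  then have "filter (\<lambda>v. \<not> v \<le> 0) \<tau> = \<tau>" by (rule filter_True)
  then show ?thesis using Sh_filter2[OF t] by simp
qed

lemma Sh_0_right: "\<tau> \<in> Sh n 0 \<Longrightarrow> \<tau> = [1..<n+1]"
proof -
  assume t: "\<tau> \<in> Sh n 0"
  have "\<forall>v\<in>set \<tau>. v \<le> n" using Sh_perm[OF t] by (auto simp: is_perm_def)
  then show ?thesis using Sh_filter1[OF t] by simp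
qed

lemma oprod_mk:
  assumes t: "\<tau> \<in> Sh (length a) (length b)" and ne: "a \<noteq> [] \<or> b \<noteq> []"
  shows "oprod (pq_prod :: _ \<Rightarrow> _ \<Rightarrow> _ \<Rightarrow> _ \<Rightarrow> 'k::field) \<tau> (mk a) (mk b) = bvec (W \<tau> a b)"
proof (cases "a = []")
  case True
  then have "\<tau> = [1..<length b + 1]" using Sh_0_left t by simp
  then have "W \<tau> a b = b" using True map_upt_nth[of b] by (simp add: times_w_def comp_w_def)
  then show ?thesis using True ne by (simp add: mk_def)
next
  case False
  show ?thesis
  proof (cases "b = []")
    case True
    then have "\<tau> = [1..<length a + 1]" using Sh_0_right t by simp
    then have "W \<tau> a b = a" using True map_upt_nth[of a] by (simp add: times_w_def comp_w_def)
    then show ?thesis using True False by (simp add: mk_def)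
  next
    case False
    then show ?thesis using \<open>a \<noteq> []\<close> by (simp add: mk_def pq_prod_bvec)
  qed
qed


context shd
begin

lemma inner_r:
  fixes x y :: "nat list \<Rightarrow> 'k::field"
  assumes x: "x \<in> hom PF_basis length n" and y: "y \<in> hom PF_basis length m" and r1: "1 \<le> r" "r < n + m"
  shows "(\<Sum>pa\<in>supp (dplus pq_cop x). \<Sum>pb\<in>supp (dplus pq_cop y).
            if odeg length (fst pa) = n1 \<and> odeg length (fst pb) = m1
            then dplus pq_cop x pa * dplus pq_cop y pb *
                 tens (oprod pq_prod g1 (fst pa) (fst pb)) (oprod pq_prod g2 (snd pa) (snd pb)) t
            else 0)
       = (\<Sum>f\<in>supp x. x f * (\<Sum>h\<in>supp y. y h * bvec (D (W \<gamma> f h) r) t))"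
proof -
  let ?T = "\<lambda>pa pb. tens (oprod pq_prod g1 (fst pa) (fst pb)) (oprod pq_prod g2 (snd pa) (snd pb)) t :: 'k"
  have "(\<Sum>pa\<in>supp (dplus pq_cop x). \<Sum>pb\<in>supp (dplus pq_cop y).
            if odeg length (fst pa) = n1 \<and> odeg length (fst pb) = m1
            then dplus pq_cop x pa * dplus pq_cop y pb * ?T pa pb else 0)
      = (\<Sum>pa\<in>supp (dplus pq_cop x). dplus pq_cop x pa * (if odeg length (fst pa) = n1 then
            (\<Sum>pb\<in>supp (dplus pq_cop y). dplus pq_cop y pb * (if odeg length (fst pb) = m1 then ?T pa pb else 0)) else 0))"
  proof (rule sum.cong[OF refl])
    fix pa
    show "(\<Sum>pb\<in>supp (dplus pq_cop y).
            if odeg length (fst pa) = n1 \<and> odeg length (fst pb) = m1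
            then dplus pq_cop x pa * dplus pq_cop y pb * ?T pa pb else 0)
        = dplus pq_cop x pa * (if odeg length (fst pa) = n1 then
            (\<Sum>pb\<in>supp (dplus pq_cop y). dplus pq_cop y pb * (if odeg length (fst pb) = m1 then ?T pa pb else 0)) else 0)"
      by (cases "odeg length (fst pa) = n1") (auto simp: sum_distrib_left mult.assoc intro!: sum.cong)
  qed
  also have "\<dots> = (\<Sum>pa\<in>supp (dplus pq_cop x). dplus pq_cop x pa * (if odeg length (fst pa) = n1 then
            (\<Sum>h\<in>supp y. y h * ?T pa (split h m1)) else 0))"
  proof (rule sum.cong[OF refl])
    fix pa
    show "dplus pq_cop x pa * (if odeg length (fst pa) = n1 then
            (\<Sum>pb\<in>supp (dplus pq_cop y). dplus pq_cop y pb * (if odeg length (fst pb) = m1 then ?T pa pb else 0)) else 0)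
        = dplus pq_cop x pa * (if odeg length (fst pa) = n1 then
            (\<Sum>h\<in>supp y. y h * ?T pa (split h m1)) else 0)"
      using CONTR[OF y m1_le, of "\<lambda>pb. ?T pa pb"] by simp
  qed
  also have "\<dots> = (\<Sum>f\<in>supp x. x f * (\<Sum>h\<in>supp y. y h * ?T (split f n1) (split h m1)))"
    by (rule CONTR[OF x n1_le, of "\<lambda>pa. \<Sum>h\<in>supp y. y h * ?T pa (split h m1)"])
  also have "\<dots> = (\<Sum>f\<in>supp x. x f * (\<Sum>h\<in>supp y. y h * bvec (D (W \<gamma> f h) r) t))"
  proof (intro sum.cong refl arg_cong2[where f="(*)"])
    fix f h assume f: "f \<in> supp x" and h: "h \<in> supp y"
    have pf: "pfc n f" "pfc m h" using hom_pfc[OF x f] hom_pfc[OF y h] by auto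
    have lf: "length f = n" "length h = m" using pf by (simp_all add: pfc_def)
    have l1: "length (park (take n1 f)) = n1" "length (park (take m1 h)) = m1"
      using lf n1_le m1_le by simp_all
    have l2: "length (park (drop n1 f)) = n - n1" "length (park (drop m1 h)) = m - m1"
      using lf by simp_all
    have "n1 \<noteq> 0 \<or> m1 \<noteq> 0" using r_eq r1 by auto
    then have ne1: "park (take n1 f) \<noteq> [] \<or> park (take m1 h) \<noteq> []"
      using l1 by (metis length_0_conv)
    have "n - n1 \<noteq> 0 \<or> m - m1 \<noteq> 0" using r_eq r1 n1_le m1_le by auto
    then have ne2: "park (drop n1 f) \<noteq> [] \<or> park (drop m1 h) \<noteq> []"
      using l2 by (metis length_0_conv)
    have o1: "oprod (pq_prod :: _ \<Rightarrow> _ \<Rightarrow> _ \<Rightarrow> _ \<Rightarrow> 'k) g1 (mk (park (take n1 f))) (mk (park (take m1 h)))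
        = bvec (W g1 (park (take n1 f)) (park (take m1 h)))"
      by (rule oprod_mk) (use g1_Sh l1 ne1 in auto)
    have o2: "oprod (pq_prod :: _ \<Rightarrow> _ \<Rightarrow> _ \<Rightarrow> _ \<Rightarrow> 'k) g2 (mk (park (drop n1 f))) (mk (park (drop m1 h)))
        = bvec (W g2 (park (drop n1 f)) (park (drop m1 h)))"
      by (rule oprod_mk) (use g2_Sh l2 ne2 in auto)
    show "?T (split f n1) (split h m1) = bvec (D (W \<gamma> f h) r) t"
      unfolding split_def fst_conv snd_conv o1 o2 tens_bvec K1[OF pf] K2[OF pf] ..
  qed
  finally show ?thesis .
qed

end

lemma compat:
  fixes x y :: "nat list \<Rightarrow> 'k::field"
  assumes x: "x \<in> hom PF_basis length n" and y: "y \<in> hom PF_basis length m" and g: "\<gamma> \<in> Sh n m"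
  shows "pq_cop (pq_prod \<gamma> x y) =
       (\<lambda>t. \<Sum>r\<in>{1..n+m-1}.
          let n1 = sh_n1 \<gamma> n r; m1 = r - n1; g = sh_decomp \<gamma> n m r in
          \<Sum>(a1, a2)\<in>supp (dplus pq_cop x). \<Sum>(b1, b2)\<in>supp (dplus pq_cop y).
            if odeg length a1 = n1 \<and> odeg length b1 = m1
            then dplus pq_cop x (a1, a2) * dplus pq_cop y (b1, b2) *
                 tens (oprod pq_prod (fst g) a1 b1) (oprod pq_prod (snd g) a2 b2) t
            else 0)"
proof (rule ext)
  fix t
  have fx: "finite (supp x)" "finite (supp y)" using x y by (simp_all add: hom_iff)
  have lw: "length (W \<gamma> f h) = n + m" for f h using Sh_length[OF g] by simp
  have fsb: "\<forall>i\<in>supp x \<times> supp y. finite (supp (bvec (W \<gamma> (fst i) (snd i)) :: _ \<Rightarrow> 'k))" by simp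
  have "pq_cop (pq_prod \<gamma> x y) t
      = (\<Sum>p\<in>supp x \<times> supp y. (x (fst p) * y (snd p)) * (\<Sum>r\<in>{1..<n+m}. bvec (D (W \<gamma> (fst p) (snd p)) r) t))"
    unfolding pq_cop_alt[of "pq_prod \<gamma> x y"]
    using LIN[OF _ fsb pq_prod_pairs[OF fx], of "\<lambda>w. \<Sum>r\<in>{1..<length w}. bvec (D w r) t"] fx lw by simp
  also have "\<dots> = (\<Sum>f\<in>supp x. \<Sum>h\<in>supp y. \<Sum>r\<in>{1..<n+m}. x f * (y h * bvec (D (W \<gamma> f h) r) t))"
    by (simp only: sum.cartesian_product') (simp add: sum_distrib_left mult.assoc)
  also have "\<dots> = (\<Sum>r\<in>{1..<n+m}. \<Sum>f\<in>supp x. x f * (\<Sum>h\<in>supp y. y h * bvec (D (W \<gamma> f h) r) t))"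
  proof -
    have "(\<Sum>f\<in>supp x. \<Sum>h\<in>supp y. \<Sum>r\<in>{1..<n+m}. x f * (y h * bvec (D (W \<gamma> f h) r) t))
        = (\<Sum>r\<in>{1..<n+m}. \<Sum>f\<in>supp x. \<Sum>h\<in>supp y. x f * (y h * bvec (D (W \<gamma> f h) r) t))"
      by (rule trans[OF sum.cong[OF refl sum.swap] sum.swap])
    then show ?thesis by (simp add: sum_distrib_left)
  qed
  also have "\<dots> = (\<Sum>r\<in>{1..n+m-1}.
          let n1 = sh_n1 \<gamma> n r; m1 = r - n1; g = sh_decomp \<gamma> n m r in
          \<Sum>(a1, a2)\<in>supp (dplus pq_cop x). \<Sum>(b1, b2)\<in>supp (dplus pq_cop y).
            if odeg length a1 = n1 \<and> odeg length b1 = m1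
            then dplus pq_cop x (a1, a2) * dplus pq_cop y (b1, b2) *
                 tens (oprod pq_prod (fst g) a1 b1) (oprod pq_prod (snd g) a2 b2) t
            else 0)"
  proof -
    have I: "{1..n+m-1} = {1..<n+m}" by auto
    show ?thesis unfolding I
    proof (rule sum.cong[OF refl])
      fix r assume r: "r \<in> {1..<n+m}"
      interpret S: shd \<gamma> n m r using g r by unfold_locales auto
      show "(\<Sum>f\<in>supp x. x f * (\<Sum>h\<in>supp y. y h * bvec (D (W \<gamma> f h) r) t)) =
          (let n1 = sh_n1 \<gamma> n r; m1 = r - n1; g = sh_decomp \<gamma> n m r in
          \<Sum>(a1, a2)\<in>supp (dplus pq_cop x). \<Sum>(b1, b2)\<in>supp (dplus pq_cop y).
            if odeg length a1 = n1 \<and> odeg length b1 = m1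
            then dplus pq_cop x (a1, a2) * dplus pq_cop y (b1, b2) *
                 tens (oprod pq_prod (fst g) a1 b1) (oprod pq_prod (snd g) a2 b2) t
            else 0)"
        unfolding Let_def S.n1_def[symmetric] S.m1_def[symmetric] S.sh_decomp_val fst_conv snd_conv
        unfolding case_prod_unfold prod.collapse using S.inner_r[OF x y, of t] r by simp
    qed
  qed
  finally show "pq_cop (pq_prod \<gamma> x y) t = (\<Sum>r\<in>{1..n+m-1}.
          let n1 = sh_n1 \<gamma> n r; m1 = r - n1; g = sh_decomp \<gamma> n m r in
          \<Sum>(a1, a2)\<in>supp (dplus pq_cop x). \<Sum>(b1, b2)\<in>supp (dplus pq_cop y).
            if odeg length a1 = n1 \<and> odeg length b1 = m1
            then dplus pq_cop x (a1, a2) * dplus pq_cop y (b1, b2) *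
                 tens (oprod pq_prod (fst g) a1 b1) (oprod pq_prod (snd g) a2 b2) t
            else 0)" .
qed


theorem mainTheorem9:
  shows "shuffle_bialgebra PF_basis length
           (pq_prod :: nat list \<Rightarrow> (nat list \<Rightarrow> 'k::field) \<Rightarrow> _ \<Rightarrow> _) pq_cop"
  unfolding shuffle_bialgebra_def
proof (intro conjI)
  show "shuffle_algebra PF_basis length (pq_prod :: nat list \<Rightarrow> (nat list \<Rightarrow> 'k::field) \<Rightarrow> _ \<Rightarrow> _)"
    by (rule SA)
  show "hom PF_basis length 0 = {(\<lambda>_. 0) :: nat list \<Rightarrow> 'k}" by (rule hom0)
  show "\<forall>x\<in>fvec PF_basis. \<forall>x'\<in>fvec PF_basis. \<forall>a.
       pq_cop (\<lambda>b. a * x b + x' b) = (\<lambda>t. a * pq_cop x t + pq_cop (x' :: nat list \<Rightarrow> 'k) t)"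
    using cop_lin by blast
  show "\<forall>n. \<forall>x\<in>hom PF_basis length n. pq_cop (x :: nat list \<Rightarrow> 'k) \<in> fvec (PF_basis \<times> PF_basis) \<and>
       (\<forall>(p, q)\<in>supp (pq_cop x). 1 \<le> length p \<and> length p \<le> n - 1 \<and> length q = n - length p)"
    using cop_deg by blast
  show "\<forall>x\<in>fvec PF_basis. lmap pq_cop (pq_cop (x :: nat list \<Rightarrow> 'k)) = rmap pq_cop (pq_cop x)"
    using coassoc by blast
  show "\<forall>n m \<gamma> x y. x \<in> hom PF_basis length n \<and> y \<in> hom PF_basis length m \<and> \<gamma> \<in> Sh n m \<longrightarrow>
       pq_cop (pq_prod \<gamma> x y) =
       (\<lambda>t. \<Sum>r\<in>{1..n+m-1}.
          let n1 = sh_n1 \<gamma> n r; m1 = r - n1; g = sh_decomp \<gamma> n m r in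
          \<Sum>(a1, a2)\<in>supp (dplus pq_cop x). \<Sum>(b1, b2)\<in>supp (dplus pq_cop y).
            if odeg length a1 = n1 \<and> odeg length b1 = m1
            then dplus pq_cop x (a1, a2) * dplus pq_cop y (b1, b2) *
                 tens (oprod (pq_prod :: nat list \<Rightarrow> (nat list \<Rightarrow> 'k::field) \<Rightarrow> _ \<Rightarrow> _) (fst g) a1 b1) (oprod pq_prod (snd g) a2 b2) t
            else 0)"
    using compat by blast
qed

end
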